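(* Let $S$ be a group. Let $\{G_j\}_{j\in J}$ be a family of proper subgroups $G_j\subset S$ containing exactly one subgroup from each conjugacy class of proper non-normal subgroups of $S$, and let $\{N_m\}_{m\in M}$ be the family of all proper normal subgroups of $S$. Then for every left $S$-act $A$, the geometric equivalence class $[A]=\{B : B \text{ is an } S\text{-act}, B\overset{\triangle}{\sim} A\}$ has a representation of exactly one of the following three types: (i) $[A]=\big[\coprod_{k\in K}\overline{G_k}^{(\ast)2}\amalg\coprod_{t\in T}\overline{G_t}\amalg\coprod_{l\in L}\overline{N_l}\big]$ for some subsets $K,T\subseteq J$ with $K\cap T=\emptyset$ and $L\subseteq M$; (ii) $[A]=\big[\coprod_{k\in K}\overline{G_k}\amalg\coprod_{l\in L}\overline{N_l}\amalg z\big]$ for some $K\subseteq J$, $L\subseteq M$; (iii) $[A]=\big[\coprod_{k\in K}\overline{G_k}\amalg\coprod_{l\in L}\overline{N_l}\amalg z_1\amalg z_2\big]$ for some $K\subseteq J$, $L\subseteq M$. (That is, $A$ is geometrically equivalent to an $S$-act of one of these forms, and $[A]$ does not admit representations of two different types.)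
   Context: For a monoid $S$, a left $S$-act is a nonempty set $A$ with a map $S\times A\to A$, $(s,a)\mapsto sa$, such that $1a=a$ and $(st)a=s(ta)$; homomorphisms are maps $f$ with $f(sa)=sf(a)$. Coproducts $\amalg$ of $S$-acts are disjoint unions with the induced action. For a nonempty finite set $X$, $F_X=\coprod_{x\in X}S_x$ is the free $S$-act on $X$ (a disjoint union of copies of the left regular act ${}_SS$). For an $S$-act $G$ and a binary relation $T\subseteq F_X\times F_X$, let $T'_G=\{\mu:F_X\to G \text{ homomorphism} : T\subseteq \ker\mu\}$ and $T''_G=\bigcap_{\mu\in T'_G}\ker\mu$ (the empty intersection being $F_X\times F_X$). Two $S$-acts $G_1,G_2$ are geometrically equivalent, $G_1\overset{\triangle}{\sim}G_2$, iff $T''_{G_1}=T''_{G_2}$ for every nonempty finite $X$ and every relation $T\subseteq F_X\times F_X$. For a subgroup $H$ of a group $S$, $\overline{H}={}_SS/H$ is the $S$-act of left cosets $tH$ with $s\cdot tH=stH$. For an $S$-act $A$, $A^{(\ast)I}=\coprod_{i\in I}A_i$ with each $A_i=A$; in particular $A^{(\ast)2}=A\amalg A$. The symbols $z,z_1,z_2$ denote one-element $S$-acts. *)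

theory Defs
  imports "HOL-Algebra.Algebra"
begin

definition is_act :: "('g, 'm) monoid_scheme \<Rightarrow> 'a set \<Rightarrow> ('g \<Rightarrow> 'a \<Rightarrow> 'a) \<Rightarrow> bool" where
  "is_act S A act \<longleftrightarrow> A \<noteq> {} \<and>
     (\<forall>s\<in>carrier S. \<forall>a\<in>A. act s a \<in> A) \<and>
     (\<forall>a\<in>A. act \<one>\<^bsub>S\<^esub> a = a) \<and>
     (\<forall>s\<in>carrier S. \<forall>t\<in>carrier S. \<forall>a\<in>A. act (s \<otimes>\<^bsub>S\<^esub> t) a = act s (act t a))"

definition act_hom :: "('g, 'm) monoid_scheme \<Rightarrow> 'a set \<Rightarrow> ('g \<Rightarrow> 'a \<Rightarrow> 'a)
    \<Rightarrow> 'b set \<Rightarrow> ('g \<Rightarrow> 'b \<Rightarrow> 'b) \<Rightarrow> ('a \<Rightarrow> 'b) \<Rightarrow> bool" where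
  "act_hom S A actA B actB f \<longleftrightarrow> (\<forall>a\<in>A. f a \<in> B) \<and>
     (\<forall>s\<in>carrier S. \<forall>a\<in>A. f (actA s a) = actB s (f a))"

text \<open>Free S-act on V: the disjoint union of copies S_x of the left regular act,
  realised as V \<times> S with s(x,t) = (x, s t).\<close>
definition free_act_carrier :: "('g, 'm) monoid_scheme \<Rightarrow> 'x set \<Rightarrow> ('x \<times> 'g) set" where
  "free_act_carrier S V = Sigma V (\<lambda>_. carrier S)"

definition free_act :: "('g, 'm) monoid_scheme \<Rightarrow> 'g \<Rightarrow> ('x \<times> 'g) \<Rightarrow> ('x \<times> 'g)" where
  "free_act S s p = (fst p, s \<otimes>\<^bsub>S\<^esub> snd p)"

text \<open>T''_G: intersection of the kernels of all homomorphisms F_X \<rightarrow> G whose kernel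
  contains T (the empty intersection being F_X \<times> F_X).\<close>
definition closure_rel :: "('g, 'm) monoid_scheme \<Rightarrow> 'x set \<Rightarrow> 'a set \<Rightarrow> ('g \<Rightarrow> 'a \<Rightarrow> 'a)
    \<Rightarrow> (('x \<times> 'g) \<times> ('x \<times> 'g)) set \<Rightarrow> (('x \<times> 'g) \<times> ('x \<times> 'g)) set" where
  "closure_rel S V G actG T =
     {(p, q). p \<in> free_act_carrier S V \<and> q \<in> free_act_carrier S V \<and>
        (\<forall>\<mu>. act_hom S (free_act_carrier S V) (free_act S) G actG \<mu> \<and>
              (\<forall>(a, b)\<in>T. \<mu> a = \<mu> b) \<longrightarrow> \<mu> p = \<mu> q)}"

text \<open>Geometric equivalence of two S-acts (finite sets V are taken to be finite
  sets of natural numbers, which covers every finite set up to bijection).\<close>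
definition geom_equiv :: "('g, 'm) monoid_scheme \<Rightarrow> 'a set \<Rightarrow> ('g \<Rightarrow> 'a \<Rightarrow> 'a)
    \<Rightarrow> 'b set \<Rightarrow> ('g \<Rightarrow> 'b \<Rightarrow> 'b) \<Rightarrow> bool" where
  "geom_equiv S G1 act1 G2 act2 \<longleftrightarrow> is_act S G1 act1 \<and> is_act S G2 act2 \<and>
     (\<forall>V :: nat set. finite V \<and> V \<noteq> {} \<longrightarrow>
        (\<forall>T. T \<subseteq> free_act_carrier S V \<times> free_act_carrier S V \<longrightarrow>
           closure_rel S V G1 act1 T = closure_rel S V G2 act2 T))"

definition left_cosets_of :: "('g, 'm) monoid_scheme \<Rightarrow> 'g set \<Rightarrow> 'g set set" where
  "left_cosets_of S H = (\<lambda>t. t <#\<^bsub>S\<^esub> H) ` carrier S"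

definition conjugate_subgroups :: "('g, 'm) monoid_scheme \<Rightarrow> 'g set \<Rightarrow> 'g set \<Rightarrow> bool" where
  "conjugate_subgroups S H H' \<longleftrightarrow> (\<exists>g\<in>carrier S. H' = (g <#\<^bsub>S\<^esub> H) #>\<^bsub>S\<^esub> inv\<^bsub>S\<^esub> g)"

text \<open>The coproduct
   \<coprod>_{H\<in>K2} (S/H \<amalg> S/H) \<amalg> \<coprod>_{H\<in>K1} S/H \<amalg> \<coprod>_{N\<in>L} S/N \<amalg> (n one-element acts), n \<le> 2,
  realised as a tagged disjoint union: tags 0,1 = the two copies for K2, tag 2 = K1,
  tag 3 = L, tags 4,5 = the one-element acts z_1, z_2.\<close>
definition rep_carrier :: "('g, 'm) monoid_scheme \<Rightarrow> 'g set set \<Rightarrow> 'g set set \<Rightarrow> 'g set set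
    \<Rightarrow> nat \<Rightarrow> (nat \<times> 'g set \<times> 'g set) set" where
  "rep_carrier S K2 K1 L n =
     {(i, H, C) | i H C. i \<in> {0, 1} \<and> H \<in> K2 \<and> C \<in> left_cosets_of S H}
   \<union> {(2, H, C) | H C. H \<in> K1 \<and> C \<in> left_cosets_of S H}
   \<union> {(3, H, C) | H C. H \<in> L \<and> C \<in> left_cosets_of S H}
   \<union> {(i, {}, {}) | i. 4 \<le> i \<and> i < 4 + n}"

definition rep_act :: "('g, 'm) monoid_scheme \<Rightarrow> 'g \<Rightarrow> (nat \<times> 'g set \<times> 'g set) \<Rightarrow> (nat \<times> 'g set \<times> 'g set)" where
  "rep_act S s x = (case x of (i, H, C) \<Rightarrow> if i \<le> 3 then (i, H, s <#\<^bsub>S\<^esub> C) else (i, H, C))"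

end

theory Submission
  imports Defs
begin


definition stab :: "('g,'m) monoid_scheme \<Rightarrow> ('g \<Rightarrow> 'x \<Rightarrow> 'x) \<Rightarrow> 'x \<Rightarrow> 'g set" where
  "stab S act x = {s \<in> carrier S. act s x = x}"
definition orb :: "('g,'m) monoid_scheme \<Rightarrow> ('g \<Rightarrow> 'x \<Rightarrow> 'x) \<Rightarrow> 'x \<Rightarrow> 'x set" where
  "orb S act x = {act s x | s. s \<in> carrier S}"
definition cj :: "('g,'m) monoid_scheme \<Rightarrow> 'g \<Rightarrow> 'g set \<Rightarrow> 'g set" where
  "cj S g H = {s \<in> carrier S. inv\<^bsub>S\<^esub> g \<otimes>\<^bsub>S\<^esub> s \<otimes>\<^bsub>S\<^esub> g \<in> H}"

context group begin

lemma cancel1 [simp]: "g \<in> carrier G \<Longrightarrow> s \<in> carrier G \<Longrightarrow> g \<otimes> (inv g \<otimes> s) = s"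
  by (simp add: m_assoc[symmetric])
lemma cancel2 [simp]: "g \<in> carrier G \<Longrightarrow> s \<in> carrier G \<Longrightarrow> inv g \<otimes> (g \<otimes> s) = s"
  by (simp add: m_assoc[symmetric])

lemma cj_one: "H \<subseteq> carrier G \<Longrightarrow> cj G \<one> H = H"
  unfolding cj_def by auto

lemma cj_cj: "g \<in> carrier G \<Longrightarrow> h \<in> carrier G \<Longrightarrow> cj G g (cj G h H) = cj G (g \<otimes> h) H"
proof -
  assume g: "g \<in> carrier G" and h: "h \<in> carrier G"
  have e: "\<And>s. s \<in> carrier G \<Longrightarrow> inv (g \<otimes> h) \<otimes> s \<otimes> (g \<otimes> h) = inv h \<otimes> (inv g \<otimes> s \<otimes> g) \<otimes> h"
    using g h by (simp add: inv_mult_group m_assoc)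
  show ?thesis unfolding cj_def using e g h by auto
qed

lemma cj_normal: "N \<lhd> G \<Longrightarrow> g \<in> carrier G \<Longrightarrow> cj G g N = N"
proof -
  assume N: "N \<lhd> G" and g: "g \<in> carrier G"
  have sub: "N \<subseteq> carrier G" using N normal_imp_subgroup subgroup.subset by blast
  have cl: "\<And>x h. x \<in> carrier G \<Longrightarrow> h \<in> N \<Longrightarrow> x \<otimes> h \<otimes> inv x \<in> N"
    using N normal_inv_iff by blast
  show ?thesis
  proof
    show "cj G g N \<subseteq> N"
    proof
      fix s assume "s \<in> cj G g N"
      then have s: "s \<in> carrier G" and h: "inv g \<otimes> s \<otimes> g \<in> N" unfolding cj_def by auto
      have "g \<otimes> (inv g \<otimes> s \<otimes> g) \<otimes> inv g = s" using s g by (simp add: m_assoc)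
      moreover have "g \<otimes> (inv g \<otimes> s \<otimes> g) \<otimes> inv g \<in> N" using cl[OF g h] .
      ultimately show "s \<in> N" by simp
    qed
    show "N \<subseteq> cj G g N"
    proof
      fix s assume s: "s \<in> N"
      have "inv g \<otimes> s \<otimes> inv (inv g) \<in> N" by (rule cl[OF inv_closed[OF g] s])
      then show "s \<in> cj G g N" unfolding cj_def using s sub g by (auto simp: inv_inv)
    qed
  qed
qed

lemma conj_eq_cj: "H \<subseteq> carrier G \<Longrightarrow> g \<in> carrier G \<Longrightarrow> (g <# H) #> inv g = cj G g H"
proof
  assume H: "H \<subseteq> carrier G" and g: "g \<in> carrier G"
  show "(g <# H) #> inv g \<subseteq> cj G g H"
  proof
    fix s assume "s \<in> (g <# H) #> inv g"
    then obtain h where h: "h \<in> H" and s: "s = g \<otimes> h \<otimes> inv g" unfolding l_coset_def r_coset_def by blast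
    have hc: "h \<in> carrier G" using h H by blast
    have "inv g \<otimes> s \<otimes> g = h" unfolding s using hc g by (simp add: m_assoc)
    then show "s \<in> cj G g H" unfolding cj_def using s h hc g by simp
  qed
  show "cj G g H \<subseteq> (g <# H) #> inv g"
  proof
    fix s assume "s \<in> cj G g H"
    then have s: "s \<in> carrier G" and h: "inv g \<otimes> s \<otimes> g \<in> H" unfolding cj_def by auto
    have "s = g \<otimes> (inv g \<otimes> s \<otimes> g) \<otimes> inv g" using s g by (simp add: m_assoc)
    then show "s \<in> (g <# H) #> inv g" unfolding l_coset_def r_coset_def using h by blast
  qed
qed

lemma conjugate_iff: "H \<subseteq> carrier G \<Longrightarrow> conjugate_subgroups G H H' \<longleftrightarrow> (\<exists>g\<in>carrier G. H' = cj G g H)"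
  unfolding conjugate_subgroups_def using conj_eq_cj by auto

lemma lcos_eq_iff: "subgroup H G \<Longrightarrow> x \<in> carrier G \<Longrightarrow> y \<in> carrier G \<Longrightarrow>
   x <# H = y <# H \<longleftrightarrow> inv y \<otimes> x \<in> H"
proof
  assume H: "subgroup H G" and x: "x \<in> carrier G" and y: "y \<in> carrier G"
  { assume e: "x <# H = y <# H"
    have "x \<in> x <# H" unfolding l_coset_def using subgroup.one_closed[OF H] x by force
    then obtain h where "h \<in> H" "x = y \<otimes> h" using e unfolding l_coset_def by auto
    then show "inv y \<otimes> x \<in> H" using y H by (simp add: subgroup.mem_carrier m_assoc[symmetric])
  }
  { assume "inv y \<otimes> x \<in> H"
    moreover have "x = y \<otimes> (inv y \<otimes> x)" using x y by simp
    ultimately have "x \<in> y <# H" unfolding l_coset_def by blast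
    then show "x <# H = y <# H" using l_repr_independence[OF _ y H] by simp }
qed


lemma stab_sub: "stab G ax x \<subseteq> carrier G" unfolding stab_def by auto

context
  fixes Ac ax assumes Ac: "is_act G Ac ax"
begin

lemma act_closed: "s \<in> carrier G \<Longrightarrow> x \<in> Ac \<Longrightarrow> ax s x \<in> Ac"
  using Ac unfolding is_act_def by blast
lemma act_one: "x \<in> Ac \<Longrightarrow> ax \<one> x = x"
  using Ac unfolding is_act_def by blast
lemma act_mult: "s \<in> carrier G \<Longrightarrow> t \<in> carrier G \<Longrightarrow> x \<in> Ac \<Longrightarrow> ax (s \<otimes> t) x = ax s (ax t x)"
  using Ac unfolding is_act_def by blast
lemma act_ne: "Ac \<noteq> {}"
  using Ac unfolding is_act_def by blast
lemma act_inv: "s \<in> carrier G \<Longrightarrow> x \<in> Ac \<Longrightarrow> ax (inv s) (ax s x) = x"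
  using act_mult[of "inv s" s x] act_one by simp
lemma act_inv2: "s \<in> carrier G \<Longrightarrow> x \<in> Ac \<Longrightarrow> ax s (ax (inv s) x) = x"
  using act_mult[of s "inv s" x] act_one by simp
lemma act_inj: "s \<in> carrier G \<Longrightarrow> x \<in> Ac \<Longrightarrow> y \<in> Ac \<Longrightarrow> ax s x = ax s y \<longleftrightarrow> x = y"
proof
  assume s: "s \<in> carrier G" and x: "x \<in> Ac" and y: "y \<in> Ac" and e: "ax s x = ax s y"
  have "ax (inv s) (ax s x) = ax (inv s) (ax s y)" using e by simp
  then show "x = y" using act_inv[OF s x] act_inv[OF s y] by simp
qed simp

lemma stab_act: "g \<in> carrier G \<Longrightarrow> x \<in> Ac \<Longrightarrow> stab G ax (ax g x) = cj G g (stab G ax x)"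
proof -
  assume g: "g \<in> carrier G" and x: "x \<in> Ac"
  have "\<And>s. s \<in> carrier G \<Longrightarrow> ax s (ax g x) = ax g x \<longleftrightarrow> ax (inv g \<otimes> s \<otimes> g) x = x"
  proof -
    fix s assume s: "s \<in> carrier G"
    have e: "ax (inv g \<otimes> s \<otimes> g) x = ax (inv g) (ax s (ax g x))"
      using g s x by (simp add: act_mult act_closed)
    have "ax s (ax g x) = ax g x \<longleftrightarrow> ax (inv g) (ax s (ax g x)) = ax (inv g) (ax g x)"
      using act_inj[of "inv g"] g s x act_closed by simp
    also have "\<dots> \<longleftrightarrow> ax (inv g \<otimes> s \<otimes> g) x = x" using e act_inv g x by simp
    finally show "ax s (ax g x) = ax g x \<longleftrightarrow> ax (inv g \<otimes> s \<otimes> g) x = x" .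
  qed
  then show ?thesis unfolding stab_def cj_def using g by blast
qed

lemma stab_subgroup: "x \<in> Ac \<Longrightarrow> subgroup (stab G ax x) G"
proof (rule subgroupI)
  assume x: "x \<in> Ac"
  show "stab G ax x \<subseteq> carrier G" by (rule stab_sub)
  show "stab G ax x \<noteq> {}" using act_one x unfolding stab_def by auto
  show "\<And>a. a \<in> stab G ax x \<Longrightarrow> inv a \<in> stab G ax x"
  proof -
    fix a assume "a \<in> stab G ax x"
    then have a: "a \<in> carrier G" and ea: "ax a x = x" unfolding stab_def by auto
    have "ax (inv a) x = x" using act_inv[OF a x] ea by simp
    then show "inv a \<in> stab G ax x" unfolding stab_def using a by simp
  qed
  show "\<And>a b. a \<in> stab G ax x \<Longrightarrow> b \<in> stab G ax x \<Longrightarrow> a \<otimes> b \<in> stab G ax x"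
    unfolding stab_def using act_mult x by auto
qed

lemma orb_self: "x \<in> Ac \<Longrightarrow> x \<in> orb G ax x"
proof -
  assume x: "x \<in> Ac"
  have "x = ax \<one> x" using act_one[OF x] by simp
  then show ?thesis unfolding orb_def by blast
qed

lemma orb_sub: "x \<in> Ac \<Longrightarrow> orb G ax x \<subseteq> Ac"
  unfolding orb_def using act_closed by auto

lemma orb_act: "g \<in> carrier G \<Longrightarrow> x \<in> Ac \<Longrightarrow> ax g x \<in> orb G ax x"
  unfolding orb_def by auto

lemma orb_eq: "x \<in> Ac \<Longrightarrow> y \<in> orb G ax x \<Longrightarrow> orb G ax y = orb G ax x"
proof -
  assume x: "x \<in> Ac" and "y \<in> orb G ax x"
  then obtain g where g: "g \<in> carrier G" and y: "y = ax g x" unfolding orb_def by auto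
  show ?thesis
  proof
    show "orb G ax y \<subseteq> orb G ax x"
    proof
      fix z assume "z \<in> orb G ax y"
      then obtain s where s: "s \<in> carrier G" and z: "z = ax s y" unfolding orb_def by auto
      have "z = ax (s \<otimes> g) x" using s g x y z by (simp add: act_mult)
      then show "z \<in> orb G ax x" unfolding orb_def using s g by auto
    qed
    show "orb G ax x \<subseteq> orb G ax y"
    proof
      fix z assume "z \<in> orb G ax x"
      then obtain s where s: "s \<in> carrier G" and z: "z = ax s x" unfolding orb_def by auto
      have "z = ax (s \<otimes> inv g) y" using s g x y z by (simp add: act_mult act_closed act_inv)
      then show "z \<in> orb G ax y" unfolding orb_def using s g by auto
    qed
  qed
qed

lemma orb_sym: "x \<in> Ac \<Longrightarrow> y \<in> orb G ax x \<Longrightarrow> x \<in> orb G ax y"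
  using orb_eq orb_self by blast

lemma stab_orb: "x \<in> Ac \<Longrightarrow> y \<in> orb G ax x \<Longrightarrow> \<exists>g\<in>carrier G. stab G ax y = cj G g (stab G ax x)"
  unfolding orb_def using stab_act by auto

end

end

context group begin

lemma hom_core:
  assumes Xa: "is_act G Xa ax" and Ya: "is_act G Ya ay"
    and Q: "\<And>x. x \<in> Xa \<Longrightarrow> Q (orb G ax x) \<in> orb G ax x"
    and D: "\<And>x. x \<in> Xa \<Longrightarrow> D (Q (orb G ax x)) \<in> Ya \<and> stab G ax (Q (orb G ax x)) \<subseteq> stab G ay (D (Q (orb G ax x)))"
  shows "\<exists>\<phi>. act_hom G Xa ax Ya ay \<phi> \<and>
     (\<forall>x\<in>Xa. \<forall>s\<in>carrier G. x = ax s (Q (orb G ax x)) \<longrightarrow> \<phi> x = ay s (D (Q (orb G ax x))))"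
proof -
  define \<phi> where "\<phi> = (\<lambda>x. ay (SOME s. s \<in> carrier G \<and> x = ax s (Q (orb G ax x))) (D (Q (orb G ax x))))"
  have ex: "\<And>x. x \<in> Xa \<Longrightarrow> \<exists>s. s \<in> carrier G \<and> x = ax s (Q (orb G ax x))"
  proof -
    fix x assume x: "x \<in> Xa"
    have "x \<in> orb G ax (Q (orb G ax x))" using orb_sym[OF Xa x Q[OF x]] .
    then show "\<exists>s. s \<in> carrier G \<and> x = ax s (Q (orb G ax x))" unfolding orb_def by auto
  qed
  have qX: "\<And>x. x \<in> Xa \<Longrightarrow> Q (orb G ax x) \<in> Xa" using Q orb_sub[OF Xa] by blast
  have key: "\<And>x s. x \<in> Xa \<Longrightarrow> s \<in> carrier G \<Longrightarrow> x = ax s (Q (orb G ax x)) \<Longrightarrow> \<phi> x = ay s (D (Q (orb G ax x)))"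
  proof -
    fix x s assume x: "x \<in> Xa" and s: "s \<in> carrier G" and xs: "x = ax s (Q (orb G ax x))"
    define q where "q = Q (orb G ax x)"
    define s' where "s' = (SOME s. s \<in> carrier G \<and> x = ax s q)"
    have s'1: "s' \<in> carrier G" and s'2: "x = ax s' q"
      using someI_ex[OF ex[OF x]] unfolding s'_def q_def by auto
    have xq: "x = ax s q" unfolding q_def by (rule xs)
    have qXa: "q \<in> Xa" unfolding q_def by (rule qX[OF x])
    have "ax (inv s' \<otimes> s) q = ax (inv s') (ax s q)" using s s'1 qXa act_mult[OF Xa] by simp
    also have "\<dots> = ax (inv s') (ax s' q)" using xq s'2 by metis
    also have "\<dots> = q" using act_inv[OF Xa] s'1 qXa by simp
    finally have "inv s' \<otimes> s \<in> stab G ax q" unfolding stab_def using s s'1 by simp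
    then have st: "inv s' \<otimes> s \<in> stab G ay (D q)" using D[OF x] unfolding q_def by blast
    have Dq: "D q \<in> Ya" using D[OF x] unfolding q_def by blast
    have "ay s (D q) = ay s' (ay (inv s' \<otimes> s) (D q))"
      using act_mult[OF Ya s'1 m_closed[OF inv_closed[OF s'1] s] Dq] s s'1 by simp
    also have "\<dots> = ay s' (D q)" using st unfolding stab_def by simp
    finally have "ay s (D q) = ay s' (D q)" .
    moreover have "\<phi> x = ay s' (D q)" unfolding \<phi>_def s'_def q_def by simp
    ultimately show "\<phi> x = ay s (D (Q (orb G ax x)))" unfolding q_def by simp
  qed
  have hom: "act_hom G Xa ax Ya ay \<phi>" unfolding act_hom_def
  proof (intro conjI ballI)
    fix x assume x: "x \<in> Xa"
    obtain s where s1: "s \<in> carrier G" and s2: "x = ax s (Q (orb G ax x))" using ex[OF x] by blast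
    show "\<phi> x \<in> Ya" using key[OF x s1 s2] act_closed[OF Ya] D[OF x] s1 by simp
  next
    fix g x assume g: "g \<in> carrier G" and x: "x \<in> Xa"
    obtain s where s1: "s \<in> carrier G" and s2: "x = ax s (Q (orb G ax x))" using ex[OF x] by blast
    have gx: "ax g x \<in> Xa" using act_closed[OF Xa g x] .
    have o: "orb G ax (ax g x) = orb G ax x" using orb_eq[OF Xa x orb_act[OF Xa g x]] .
    have "ax g x = ax g (ax s (Q (orb G ax x)))" using s2 by simp
    also have "\<dots> = ax (g \<otimes> s) (Q (orb G ax x))" using act_mult[OF Xa g s1 qX[OF x]] by simp
    finally have e: "ax g x = ax (g \<otimes> s) (Q (orb G ax (ax g x)))" using o by simp
    have "\<phi> (ax g x) = ay (g \<otimes> s) (D (Q (orb G ax (ax g x))))" using key[OF gx _ e] g s1 by simp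
    also have "\<dots> = ay (g \<otimes> s) (D (Q (orb G ax x)))" using o by simp
    also have "\<dots> = ay g (ay s (D (Q (orb G ax x))))" using act_mult[OF Ya g s1] D[OF x] by simp
    also have "\<dots> = ay g (\<phi> x)" using key[OF x s1 s2] by simp
    finally show "\<phi> (ax g x) = ay g (\<phi> x)" .
  qed
  show ?thesis using hom key by blast
qed

lemma hom_two:
  assumes Xa: "is_act G Xa ax" and Ya: "is_act G Ya ay"
    and P: "\<And>x. x \<in> Xa \<Longrightarrow> \<exists>y\<in>Ya. stab G ax x \<subseteq> stab G ay y"
    and u: "u \<in> Xa" and v: "v \<in> Xa" and y1: "y1 \<in> Ya" and y2: "y2 \<in> Ya"
    and su: "stab G ax u \<subseteq> stab G ay y1" and sv: "stab G ax v \<subseteq> stab G ay y2"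
    and ov: "v \<in> orb G ax u \<Longrightarrow> v = u \<and> y2 = y1"
  shows "\<exists>\<phi>. act_hom G Xa ax Ya ay \<phi> \<and> \<phi> u = y1 \<and> \<phi> v = y2"
proof -
  define Q where "Q = (\<lambda>Os. if u \<in> Os then u else if v \<in> Os then v else (SOME x. x \<in> Os))"
  define D where "D = (\<lambda>q. if q = u then y1 else if q = v then y2 else (SOME y. y \<in> Ya \<and> stab G ax q \<subseteq> stab G ay y))"
  have Q: "\<And>x. x \<in> Xa \<Longrightarrow> Q (orb G ax x) \<in> orb G ax x"
  proof -
    fix x assume x: "x \<in> Xa"
    have "(SOME y. y \<in> orb G ax x) \<in> orb G ax x" using orb_self[OF Xa x] by (rule someI)
    then show "Q (orb G ax x) \<in> orb G ax x" unfolding Q_def by auto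
  qed
  have D: "\<And>x. x \<in> Xa \<Longrightarrow> D (Q (orb G ax x)) \<in> Ya \<and> stab G ax (Q (orb G ax x)) \<subseteq> stab G ay (D (Q (orb G ax x)))"
  proof -
    fix x assume x: "x \<in> Xa"
    define q where "q = Q (orb G ax x)"
    have qX: "q \<in> Xa" using Q[OF x] orb_sub[OF Xa x] unfolding q_def by blast
    have "D q \<in> Ya \<and> stab G ax q \<subseteq> stab G ay (D q)"
    proof (cases "q = u")
      case True then show ?thesis unfolding D_def using y1 su by simp
    next
      case F: False
      show ?thesis
      proof (cases "q = v")
        case True then show ?thesis unfolding D_def using F y2 sv by simp
      next
        case False
        have "\<exists>y. y \<in> Ya \<and> stab G ax q \<subseteq> stab G ay y" using P[OF qX] by blast
        from someI_ex[OF this] show ?thesis unfolding D_def using F False by simp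
      qed
    qed
    then show "D (Q (orb G ax x)) \<in> Ya \<and> stab G ax (Q (orb G ax x)) \<subseteq> stab G ay (D (Q (orb G ax x)))"
      unfolding q_def .
  qed
  obtain \<phi> where hom: "act_hom G Xa ax Ya ay \<phi>"
    and ev: "\<And>x s. x \<in> Xa \<Longrightarrow> s \<in> carrier G \<Longrightarrow> x = ax s (Q (orb G ax x)) \<Longrightarrow> \<phi> x = ay s (D (Q (orb G ax x)))"
    using hom_core[OF Xa Ya Q D] by blast
  have Qu: "Q (orb G ax u) = u" unfolding Q_def using orb_self[OF Xa u] by simp
  have pu: "\<phi> u = y1"
  proof -
    have "u = ax \<one> (Q (orb G ax u))" using Qu act_one[OF Xa u] by simp
    then have "\<phi> u = ay \<one> (D (Q (orb G ax u)))" using ev[OF u] by simp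
    then show ?thesis using Qu act_one[OF Ya y1] unfolding D_def by simp
  qed
  have pv: "\<phi> v = y2"
  proof (cases "v \<in> orb G ax u")
    case True then show ?thesis using ov pu by simp
  next
    case False
    then have nu: "u \<notin> orb G ax v" using orb_sym[OF Xa v] by blast
    have vu: "v \<noteq> u" using False orb_self[OF Xa u] by blast
    have Qv: "Q (orb G ax v) = v" unfolding Q_def using orb_self[OF Xa v] nu by simp
    have "v = ax \<one> (Q (orb G ax v))" using Qv act_one[OF Xa v] by simp
    then have "\<phi> v = ay \<one> (D (Q (orb G ax v)))" using ev[OF v] by simp
    then show ?thesis using Qv vu act_one[OF Ya y2] unfolding D_def by simp
  qed
  show ?thesis using hom pu pv by blast
qed

lemma sep_homs:
  assumes Xa: "is_act G Xa ax" and Ya: "is_act G Ya ay"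
    and P: "\<And>x. x \<in> Xa \<Longrightarrow> \<exists>y\<in>Ya. stab G ay y = stab G ax x"
    and Q2: "\<And>u v. u \<in> Xa \<Longrightarrow> v \<in> Xa \<Longrightarrow> v \<notin> orb G ax u \<Longrightarrow>
        \<exists>y1\<in>Ya. \<exists>y2\<in>Ya. stab G ax u \<subseteq> stab G ay y1 \<and> stab G ax v \<subseteq> stab G ay y2 \<and> y1 \<noteq> y2"
  shows "\<forall>u\<in>Xa. \<forall>v\<in>Xa. u \<noteq> v \<longrightarrow> (\<exists>\<phi>. act_hom G Xa ax Ya ay \<phi> \<and> \<phi> u \<noteq> \<phi> v)"
proof (intro ballI impI)
  fix u v assume u: "u \<in> Xa" and v: "v \<in> Xa" and uv: "u \<noteq> v"
  have P': "\<exists>y\<in>Ya. stab G ax x \<subseteq> stab G ay y" if x: "x \<in> Xa" for x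
  proof -
    obtain y where "y \<in> Ya" "stab G ay y = stab G ax x" using P[OF x] by blast
    then show ?thesis by auto
  qed
  show "\<exists>\<phi>. act_hom G Xa ax Ya ay \<phi> \<and> \<phi> u \<noteq> \<phi> v"
  proof (cases "v \<in> orb G ax u")
    case True
    then obtain g where g: "g \<in> carrier G" and vg: "v = ax g u" unfolding orb_def by auto
    obtain y1 where y1: "y1 \<in> Ya" and sy: "stab G ay y1 = stab G ax u" using P[OF u] by blast
    obtain \<phi> where hom: "act_hom G Xa ax Ya ay \<phi>" and pu: "\<phi> u = y1"
      using hom_two[OF Xa Ya P' u u y1 y1] sy by auto
    have pv: "\<phi> v = ay g y1" using hom g u pu vg unfolding act_hom_def by simp
    have "\<phi> u \<noteq> \<phi> v"
    proof
      assume "\<phi> u = \<phi> v"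
      then have "ay g y1 = y1" using pu pv by simp
      then have "g \<in> stab G ax u" using sy g unfolding stab_def by blast
      then have "v = u" using vg unfolding stab_def by simp
      then show False using uv by simp
    qed
    then show ?thesis using hom by blast
  next
    case False
    obtain y1 y2 where y: "y1 \<in> Ya" "y2 \<in> Ya" "stab G ax u \<subseteq> stab G ay y1" "stab G ax v \<subseteq> stab G ay y2" "y1 \<noteq> y2"
      using Q2[OF u v False] by blast
    obtain \<phi> where "act_hom G Xa ax Ya ay \<phi>" "\<phi> u = y1" "\<phi> v = y2"
      using hom_two[OF Xa Ya P' u v y(1,2,3,4)] False by blast
    then show ?thesis using y(5) by blast
  qed
qed

end

lemma closure_sub:
  assumes sep: "\<forall>u\<in>Xa. \<forall>v\<in>Xa. u \<noteq> v \<longrightarrow> (\<exists>\<phi>. act_hom S Xa ax Ya ay \<phi> \<and> \<phi> u \<noteq> \<phi> v)"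
  shows "closure_rel S V Ya ay T \<subseteq> closure_rel S V Xa ax T"
proof
  fix pq assume pq: "pq \<in> closure_rel S V Ya ay T"
  obtain p q where pqd: "pq = (p, q)" by (cases pq) blast
  have p: "p \<in> free_act_carrier S V" and q: "q \<in> free_act_carrier S V"
    and all: "\<And>\<mu>. act_hom S (free_act_carrier S V) (free_act S) Ya ay \<mu> \<Longrightarrow> (\<forall>(a, b)\<in>T. \<mu> a = \<mu> b) \<Longrightarrow> \<mu> p = \<mu> q"
    using pq unfolding pqd closure_rel_def by auto
  have "\<mu> p = \<mu> q" if h: "act_hom S (free_act_carrier S V) (free_act S) Xa ax \<mu>" and kT: "\<forall>(a, b)\<in>T. \<mu> a = \<mu> b" for \<mu>
  proof (rule ccontr)
    assume ne: "\<mu> p \<noteq> \<mu> q"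
    have "\<mu> p \<in> Xa" "\<mu> q \<in> Xa" using h p q unfolding act_hom_def by auto
    then obtain \<phi> where hp: "act_hom S Xa ax Ya ay \<phi>" and ne2: "\<phi> (\<mu> p) \<noteq> \<phi> (\<mu> q)" using sep ne by blast
    have "act_hom S (free_act_carrier S V) (free_act S) Ya ay (\<phi> \<circ> \<mu>)"
      using h hp unfolding act_hom_def by auto
    moreover have "\<forall>(a, b)\<in>T. (\<phi> \<circ> \<mu>) a = (\<phi> \<circ> \<mu>) b" using kT by auto
    ultimately have "(\<phi> \<circ> \<mu>) p = (\<phi> \<circ> \<mu>) q" using all by blast
    then show False using ne2 by simp
  qed
  then show "pq \<in> closure_rel S V Xa ax T" unfolding pqd closure_rel_def using p q by auto
qed

lemma geom_equivI:
  assumes "is_act S Xa ax" "is_act S Ya ay"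
    and "\<forall>u\<in>Xa. \<forall>v\<in>Xa. u \<noteq> v \<longrightarrow> (\<exists>\<phi>. act_hom S Xa ax Ya ay \<phi> \<and> \<phi> u \<noteq> \<phi> v)"
    and "\<forall>u\<in>Ya. \<forall>v\<in>Ya. u \<noteq> v \<longrightarrow> (\<exists>\<phi>. act_hom S Ya ay Xa ax \<phi> \<and> \<phi> u \<noteq> \<phi> v)"
  shows "geom_equiv S Xa ax Ya ay"
  unfolding geom_equiv_def
proof (intro conjI allI impI)
  fix V :: "nat set" and T
  show "closure_rel S V Xa ax T = closure_rel S V Ya ay T"
    by (rule subset_antisym; rule closure_sub; fact)
qed (fact assms)+




definition fixp :: "('g,'m) monoid_scheme \<Rightarrow> 'x set \<Rightarrow> ('g \<Rightarrow> 'x \<Rightarrow> 'x) \<Rightarrow> 'x set" where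
  "fixp S Xa act = {x \<in> Xa. \<forall>s\<in>carrier S. act s x = x}"

lemma geom_equiv_sym: "geom_equiv S Xa ax Ya ay \<Longrightarrow> geom_equiv S Ya ay Xa ax"
proof -
  assume h: "geom_equiv S Xa ax Ya ay"
  show ?thesis unfolding geom_equiv_def
  proof (intro conjI allI impI)
    show "is_act S Ya ay" "is_act S Xa ax" using h unfolding geom_equiv_def by blast+
    fix V :: "nat set" and T assume "finite V \<and> V \<noteq> {}" "T \<subseteq> free_act_carrier S V \<times> free_act_carrier S V"
    then have "closure_rel S V Xa ax T = closure_rel S V Ya ay T" using h unfolding geom_equiv_def by blast
    then show "closure_rel S V Ya ay T = closure_rel S V Xa ax T" by (rule sym)
  qed
qed

context group begin

lemma free_hom:
  assumes Ya: "is_act G Ya ay" and a: "\<And>i. i \<in> V \<Longrightarrow> a i \<in> Ya"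
  shows "act_hom G (free_act_carrier G V) (free_act G) Ya ay (\<lambda>p. ay (snd p) (a (fst p)))"
  unfolding act_hom_def
proof (intro conjI ballI)
  fix p assume "p \<in> free_act_carrier G V"
  then obtain i t where p: "p = (i, t)" "i \<in> V" "t \<in> carrier G" unfolding free_act_carrier_def by blast
  show "ay (snd p) (a (fst p)) \<in> Ya" using p act_closed[OF Ya] a by simp
next
  fix s p assume s: "s \<in> carrier G" and "p \<in> free_act_carrier G V"
  then obtain i t where p: "p = (i, t)" "i \<in> V" "t \<in> carrier G" unfolding free_act_carrier_def by blast
  show "ay (snd (free_act G s p)) (a (fst (free_act G s p))) = ay s (ay (snd p) (a (fst p)))"
    unfolding free_act_def using p act_mult[OF Ya s p(3) a[OF p(2)]] by simp
qed

lemma hom_free_eval: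
  assumes h: "act_hom G (free_act_carrier G V) (free_act G) Ya ay \<mu>" and i: "i \<in> V" and s: "s \<in> carrier G"
  shows "\<mu> (i, s) = ay s (\<mu> (i, \<one>))"
proof -
  have "(i, \<one>) \<in> free_act_carrier G V" unfolding free_act_carrier_def using i by simp
  then have "\<mu> (free_act G s (i, \<one>)) = ay s (\<mu> (i, \<one>))" using h s unfolding act_hom_def by blast
  then show ?thesis unfolding free_act_def using s by simp
qed

lemma hom_free_closed:
  assumes h: "act_hom G (free_act_carrier G V) (free_act G) Ya ay \<mu>" and i: "i \<in> V" and s: "s \<in> carrier G"
  shows "\<mu> (i, s) \<in> Ya"
proof -
  have "(i, s) \<in> free_act_carrier G V" unfolding free_act_carrier_def using i s by simp
  then show ?thesis using h unfolding act_hom_def by blast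
qed

lemma not_in_closure:
  assumes "p \<in> free_act_carrier G V" "q \<in> free_act_carrier G V"
    and "act_hom G (free_act_carrier G V) (free_act G) Ya ay \<mu>" "\<forall>(a, b)\<in>T. \<mu> a = \<mu> b" "\<mu> p \<noteq> \<mu> q"
  shows "(p, q) \<notin> closure_rel G V Ya ay T"
proof
  assume "(p, q) \<in> closure_rel G V Ya ay T"
  then have "\<forall>\<mu>. act_hom G (free_act_carrier G V) (free_act G) Ya ay \<mu> \<and> (\<forall>(a, b)\<in>T. \<mu> a = \<mu> b) \<longrightarrow> \<mu> p = \<mu> q"
    unfolding closure_rel_def by simp
  then have "\<mu> p = \<mu> q" using assms(3,4) by blast
  then show False using assms(5) by simp
qed

lemma in_closure:
  assumes "p \<in> free_act_carrier G V" "q \<in> free_act_carrier G V"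
    and "\<And>\<mu>. act_hom G (free_act_carrier G V) (free_act G) Ya ay \<mu> \<Longrightarrow> \<forall>(a, b)\<in>T. \<mu> a = \<mu> b \<Longrightarrow> \<mu> p = \<mu> q"
  shows "(p, q) \<in> closure_rel G V Ya ay T"
proof -
  have "\<forall>\<mu>. act_hom G (free_act_carrier G V) (free_act G) Ya ay \<mu> \<and> (\<forall>(a, b)\<in>T. \<mu> a = \<mu> b) \<longrightarrow> \<mu> p = \<mu> q"
    using assms(3) by blast
  then show ?thesis unfolding closure_rel_def using assms(1,2) by simp
qed

lemma closure_eq:
  fixes V :: "nat set"
  assumes "geom_equiv G Xa ax Ya ay" "finite V" "V \<noteq> {}" "T \<subseteq> free_act_carrier G V \<times> free_act_carrier G V"
  shows "closure_rel G V Xa ax T = closure_rel G V Ya ay T"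
proof -
  have h: "\<forall>V::nat set. finite V \<and> V \<noteq> {} \<longrightarrow> (\<forall>T. T \<subseteq> free_act_carrier G V \<times> free_act_carrier G V \<longrightarrow>
           closure_rel G V Xa ax T = closure_rel G V Ya ay T)"
    using assms(1) unfolding geom_equiv_def by (elim conjE)
  have "finite V \<and> V \<noteq> {} \<longrightarrow> (\<forall>T. T \<subseteq> free_act_carrier G V \<times> free_act_carrier G V \<longrightarrow>
           closure_rel G V Xa ax T = closure_rel G V Ya ay T)" using h by (rule spec)
  then have "\<forall>T. T \<subseteq> free_act_carrier G V \<times> free_act_carrier G V \<longrightarrow>
           closure_rel G V Xa ax T = closure_rel G V Ya ay T" using assms(2,3) by simp
  then have "T \<subseteq> free_act_carrier G V \<times> free_act_carrier G V \<longrightarrow>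
           closure_rel G V Xa ax T = closure_rel G V Ya ay T" by (rule spec)
  then show ?thesis using assms(4) by (rule mp)
qed

lemma inv_fix1:
  assumes ge: "geom_equiv G Xa ax Ya ay" and z: "z \<in> fixp G Xa ax"
  shows "fixp G Ya ay \<noteq> {}"
proof
  assume nf: "fixp G Ya ay = {}"
  have Xa: "is_act G Xa ax" and Ya: "is_act G Ya ay" using ge unfolding geom_equiv_def by auto
  obtain w where w: "w \<in> Ya" using act_ne[OF Ya] by blast
  then obtain g where g: "g \<in> carrier G" and gw: "ay g w \<noteq> w" using nf unfolding fixp_def by blast
  have F0: "(0::nat, \<one>) \<in> free_act_carrier G {0::nat}" "(0::nat, g) \<in> free_act_carrier G {0::nat}"
    unfolding free_act_carrier_def using g by auto
  have "((0::nat, \<one>), (0, g)) \<notin> closure_rel G {0::nat} Ya ay {}"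
  proof (rule not_in_closure[OF F0 free_hom[OF Ya, of "{0}" "\<lambda>_. w"]])
    show "\<And>i. i \<in> {0} \<Longrightarrow> w \<in> Ya" using w by simp
    show "ay (snd (0::nat, \<one>)) w \<noteq> ay (snd (0::nat, g)) w" using act_one[OF Ya w] gw by simp
  qed simp
  then have "((0::nat, \<one>), (0, g)) \<notin> closure_rel G {0::nat} Xa ax {}"
    using closure_eq[OF ge, of "{0::nat}" "{}"] by simp
  then obtain \<mu> where h: "act_hom G (free_act_carrier G {0::nat}) (free_act G) Xa ax \<mu>"
    and ne: "\<mu> (0, \<one>) \<noteq> \<mu> (0, g)"
    using in_closure[OF F0, of Xa ax "{}"] by blast
  define b where "b = \<mu> (0, \<one>)"
  have b: "b \<in> Xa" unfolding b_def using hom_free_closed[OF h] by simp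
  have gb: "ax g b \<noteq> b" using ne hom_free_eval[OF h _ g] unfolding b_def by simp
  define T2 where "T2 = {((0::nat, s), (0::nat, \<one>)) | s. s \<in> carrier G}"
  have F1: "(1::nat, \<one>) \<in> free_act_carrier G {0::nat,1}" "(1::nat, g) \<in> free_act_carrier G {0::nat,1}"
    unfolding free_act_carrier_def using g by auto
  have "((1::nat, \<one>), (1, g)) \<in> closure_rel G {0::nat,1} Ya ay T2"
  proof (rule in_closure[OF F1])
    fix \<mu> assume h: "act_hom G (free_act_carrier G {0::nat,1}) (free_act G) Ya ay \<mu>" and kT: "\<forall>(a, b)\<in>T2. \<mu> a = \<mu> b"
    have "\<mu> (0, \<one>) \<in> fixp G Ya ay"
      unfolding fixp_def
    proof (intro CollectI conjI ballI)
      show "\<mu> (0, \<one>) \<in> Ya" using hom_free_closed[OF h] by simp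
      fix s assume s: "s \<in> carrier G"
      have "\<mu> (0, s) = \<mu> (0, \<one>)" using kT s unfolding T2_def by blast
      then show "ay s (\<mu> (0, \<one>)) = \<mu> (0, \<one>)" using hom_free_eval[OF h _ s] by simp
    qed
    then show "\<mu> (1, \<one>) = \<mu> (1, g)" using nf by simp
  qed
  moreover have "((1::nat, \<one>), (1, g)) \<notin> closure_rel G {0::nat,1} Xa ax T2"
  proof (rule not_in_closure[OF F1 free_hom[OF Xa, of "{0,1}" "\<lambda>i. if i = 0 then z else b"]])
    show "\<And>i. i \<in> {0,1} \<Longrightarrow> (if i = 0 then z else b) \<in> Xa" using z b unfolding fixp_def by auto
    show "\<forall>(p, q)\<in>T2. ax (snd p) (if fst p = 0 then z else b) = ax (snd q) (if fst q = 0 then z else b)"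
      using z act_one[OF Xa] unfolding T2_def fixp_def by auto
    show "ax (snd (1::nat, \<one>)) (if fst (1::nat, \<one>) = 0 then z else b) \<noteq> ax (snd (1::nat, g)) (if fst (1::nat, g) = 0 then z else b)"
      using act_one[OF Xa b] gb by simp
  qed
  moreover have "T2 \<subseteq> free_act_carrier G {0::nat,1} \<times> free_act_carrier G {0::nat,1}"
    unfolding T2_def free_act_carrier_def by auto
  ultimately show False using closure_eq[OF ge, of "{0::nat,1}" T2] by simp
qed

lemma inv_fix2:
  assumes ge: "geom_equiv G Xa ax Ya ay" and z1: "z1 \<in> fixp G Xa ax" and z2: "z2 \<in> fixp G Xa ax" and zz: "z1 \<noteq> z2"
  shows "\<exists>w1\<in>fixp G Ya ay. \<exists>w2\<in>fixp G Ya ay. w1 \<noteq> w2"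
proof (rule ccontr)
  assume nf: "\<not> (\<exists>w1\<in>fixp G Ya ay. \<exists>w2\<in>fixp G Ya ay. w1 \<noteq> w2)"
  have Xa: "is_act G Xa ax" and Ya: "is_act G Ya ay" using ge unfolding geom_equiv_def by auto
  define T3 where "T3 = {((i::nat, s), (i, \<one>)) | i s. i \<in> {0,1} \<and> s \<in> carrier G}"
  have F1: "(0::nat, \<one>) \<in> free_act_carrier G {0::nat,1}" "(1::nat, \<one>) \<in> free_act_carrier G {0::nat,1}"
    unfolding free_act_carrier_def by auto
  have fx: "\<mu> (i, \<one>) \<in> fixp G Ya ay" if h: "act_hom G (free_act_carrier G {0::nat,1}) (free_act G) Ya ay \<mu>"
     and kT: "\<forall>(a, b)\<in>T3. \<mu> a = \<mu> b" and i: "i \<in> {0,1}" for \<mu> i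
    unfolding fixp_def
  proof (intro CollectI conjI ballI)
    show "\<mu> (i, \<one>) \<in> Ya" using hom_free_closed[OF h i] by simp
    fix s assume s: "s \<in> carrier G"
    have "\<mu> (i, s) = \<mu> (i, \<one>)" using kT s i unfolding T3_def by blast
    then show "ay s (\<mu> (i, \<one>)) = \<mu> (i, \<one>)" using hom_free_eval[OF h i s] by simp
  qed
  have "((0::nat, \<one>), (1::nat, \<one>)) \<in> closure_rel G {0::nat,1} Ya ay T3"
  proof (rule in_closure[OF F1])
    fix \<mu> assume h: "act_hom G (free_act_carrier G {0::nat,1}) (free_act G) Ya ay \<mu>" and kT: "\<forall>(a, b)\<in>T3. \<mu> a = \<mu> b"
    show "\<mu> (0, \<one>) = \<mu> (1, \<one>)" using fx[OF h kT, of 0] fx[OF h kT, of 1] nf by auto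
  qed
  moreover have "((0::nat, \<one>), (1::nat, \<one>)) \<notin> closure_rel G {0::nat,1} Xa ax T3"
  proof (rule not_in_closure[OF F1 free_hom[OF Xa, of "{0,1}" "\<lambda>i. if i = 0 then z1 else z2"]])
    show "\<And>i. i \<in> {0,1} \<Longrightarrow> (if i = 0 then z1 else z2) \<in> Xa" using z1 z2 unfolding fixp_def by auto
    show "\<forall>(p, q)\<in>T3. ax (snd p) (if fst p = 0 then z1 else z2) = ax (snd q) (if fst q = 0 then z1 else z2)"
      using z1 z2 act_one[OF Xa] unfolding T3_def fixp_def by auto
    show "ax (snd (0::nat, \<one>)) (if fst (0::nat, \<one>) = 0 then z1 else z2) \<noteq> ax (snd (1::nat, \<one>)) (if fst (1::nat, \<one>) = 0 then z1 else z2)"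
      using act_one[OF Xa] z1 z2 zz unfolding fixp_def by simp
  qed
  moreover have "T3 \<subseteq> free_act_carrier G {0::nat,1} \<times> free_act_carrier G {0::nat,1}"
    unfolding T3_def free_act_carrier_def by auto
  ultimately show False using closure_eq[OF ge, of "{0::nat,1}" T3] by simp
qed

end



context group begin

lemma fixp_stab: "x \<in> fixp G Xa ax \<longleftrightarrow> x \<in> Xa \<and> stab G ax x = carrier G"
  unfolding fixp_def stab_def by blast

lemma cj_back: "H \<subseteq> carrier G \<Longrightarrow> t \<in> carrier G \<Longrightarrow> cj G (inv t) (cj G t H) = H"
  using cj_cj[of "inv t" t H] cj_one[of H] by simp

lemma cj_carrier: "t \<in> carrier G \<Longrightarrow> cj G t (carrier G) = carrier G"
  unfolding cj_def by auto

lemma cj_proper: "H \<subseteq> carrier G \<Longrightarrow> t \<in> carrier G \<Longrightarrow> cj G t H = carrier G \<Longrightarrow> H = carrier G"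
  using cj_back[of H t] cj_carrier[of "inv t"] by simp

lemma rep_E:
  assumes "x \<in> rep_carrier G K2 K1 L n"
  obtains (c) i H t where "x = (i, H, l_coset G t H)" "t \<in> carrier G" "(i \<in> {0,1} \<and> H \<in> K2) \<or> (i = 2 \<and> H \<in> K1) \<or> (i = 3 \<and> H \<in> L)"
    | (z) i where "x = (i, {}, {})" "4 \<le> i" "i < 4 + n"
  using assms unfolding rep_carrier_def left_cosets_of_def by blast

lemma rep_I01: "i \<in> {0,1} \<Longrightarrow> H \<in> K2 \<Longrightarrow> t \<in> carrier G \<Longrightarrow> (i, H, l_coset G t H) \<in> rep_carrier G K2 K1 L n"
  unfolding rep_carrier_def left_cosets_of_def by blast
lemma rep_I2: "H \<in> K1 \<Longrightarrow> t \<in> carrier G \<Longrightarrow> (2, H, l_coset G t H) \<in> rep_carrier G K2 K1 L n"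
  unfolding rep_carrier_def left_cosets_of_def by blast
lemma rep_I3: "H \<in> L \<Longrightarrow> t \<in> carrier G \<Longrightarrow> (3, H, l_coset G t H) \<in> rep_carrier G K2 K1 L n"
  unfolding rep_carrier_def left_cosets_of_def by blast
lemma rep_Iz: "4 \<le> i \<Longrightarrow> i < 4 + n \<Longrightarrow> (i, {}, {}) \<in> rep_carrier G K2 K1 L n"
  unfolding rep_carrier_def by blast

lemma rep_act_c: "i \<le> 3 \<Longrightarrow> H \<subseteq> carrier G \<Longrightarrow> s \<in> carrier G \<Longrightarrow> t \<in> carrier G \<Longrightarrow>
    rep_act G s (i, H, l_coset G t H) = (i, H, l_coset G (s \<otimes> t) H)"
  unfolding rep_act_def by (simp add: lcos_m_assoc)

lemma rep_act_z: "4 \<le> i \<Longrightarrow> rep_act G s (i, H, C) = (i, H, C)"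
  unfolding rep_act_def by simp

lemma rep_c_cases: "((i::nat) \<in> {0,1} \<and> H \<in> K2) \<or> (i = 2 \<and> H \<in> K1) \<or> (i = 3 \<and> H \<in> L) \<Longrightarrow> i \<le> 3 \<and> H \<in> K2 \<union> K1 \<union> L"
  by auto

lemma rep_is_act:
  assumes sub: "\<And>H. H \<in> K2 \<union> K1 \<union> L \<Longrightarrow> subgroup H G" and ne: "rep_carrier G K2 K1 L n \<noteq> {}"
  shows "is_act G (rep_carrier G K2 K1 L n) (rep_act G)"
  unfolding is_act_def
proof (intro conjI ballI)
  show "rep_carrier G K2 K1 L n \<noteq> {}" by (rule ne)
next
  fix s x assume s: "s \<in> carrier G" and x: "x \<in> rep_carrier G K2 K1 L n"
  from x show "rep_act G s x \<in> rep_carrier G K2 K1 L n"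
  proof (cases rule: rep_E)
    case (c i H t)
    have Hc: "i \<le> 3" "H \<in> K2 \<union> K1 \<union> L" using rep_c_cases[OF c(3)] by auto
    have Hs: "H \<subseteq> carrier G" using sub[OF Hc(2)] subgroup.subset by blast
    have e: "rep_act G s x = (i, H, l_coset G (s \<otimes> t) H)" using c rep_act_c[OF Hc(1) Hs s] by simp
    have st: "s \<otimes> t \<in> carrier G" using s c(2) by simp
    from c(3) have "(i, H, l_coset G (s \<otimes> t) H) \<in> rep_carrier G K2 K1 L n"
    proof (elim disjE conjE)
      assume "i \<in> {0,1}" "H \<in> K2" then show ?thesis by (rule rep_I01[OF _ _ st])
    next
      assume "i = 2" "H \<in> K1" then show ?thesis using rep_I2[OF _ st] by simp
    next
      assume "i = 3" "H \<in> L" then show ?thesis using rep_I3[OF _ st] by simp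
    qed
    then show ?thesis unfolding e .
  next
    case (z i) then show ?thesis using x rep_act_z by simp
  qed
next
  fix x assume x: "x \<in> rep_carrier G K2 K1 L n"
  from x show "rep_act G \<one> x = x"
  proof (cases rule: rep_E)
    case (c i H t)
    have Hc: "i \<le> 3" "H \<in> K2 \<union> K1 \<union> L" using rep_c_cases[OF c(3)] by auto
    have Hs: "H \<subseteq> carrier G" using sub[OF Hc(2)] subgroup.subset by blast
    show ?thesis using c rep_act_c[OF Hc(1) Hs one_closed] by simp
  next
    case (z i) then show ?thesis using rep_act_z by simp
  qed
next
  fix s u x assume s: "s \<in> carrier G" and u: "u \<in> carrier G" and x: "x \<in> rep_carrier G K2 K1 L n"
  from x show "rep_act G (s \<otimes> u) x = rep_act G s (rep_act G u x)"
  proof (cases rule: rep_E)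
    case (c i H t)
    have Hc: "i \<le> 3" "H \<in> K2 \<union> K1 \<union> L" using rep_c_cases[OF c(3)] by auto
    have Hs: "H \<subseteq> carrier G" using sub[OF Hc(2)] subgroup.subset by blast
    have e1: "rep_act G (s \<otimes> u) x = (i, H, l_coset G (s \<otimes> u \<otimes> t) H)" using c rep_act_c[OF Hc(1) Hs _ c(2)] s u by simp
    have e2: "rep_act G u x = (i, H, l_coset G (u \<otimes> t) H)" using c rep_act_c[OF Hc(1) Hs u c(2)] by simp
    have e3: "rep_act G s (i, H, l_coset G (u \<otimes> t) H) = (i, H, (s \<otimes> (u \<otimes> t)) <# H)"
      using rep_act_c[OF Hc(1) Hs s] u c(2) by simp
    show ?thesis using e1 e2 e3 s u c(2) by (simp add: m_assoc)
  next
    case (z i) then show ?thesis using rep_act_z by simp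
  qed
qed

lemma rep_stab_c:
  assumes H: "subgroup H G" and t: "t \<in> carrier G" and i: "i \<le> 3"
  shows "stab G (rep_act G) (i, H, l_coset G t H) = cj G t H"
proof -
  have Hs: "H \<subseteq> carrier G" using H subgroup.subset by blast
  have "rep_act G s (i, H, l_coset G t H) = (i, H, l_coset G t H) \<longleftrightarrow> inv t \<otimes> s \<otimes> t \<in> H" if s: "s \<in> carrier G" for s
  proof -
    have "rep_act G s (i, H, l_coset G t H) = (i, H, l_coset G t H) \<longleftrightarrow> l_coset G (s \<otimes> t) H = l_coset G t H"
      using rep_act_c[OF i Hs s t] by simp
    also have "\<dots> \<longleftrightarrow> inv t \<otimes> (s \<otimes> t) \<in> H" using lcos_eq_iff[OF H m_closed[OF s t] t] .
    finally show ?thesis using s t by (simp add: m_assoc)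
  qed
  then show ?thesis unfolding stab_def cj_def by blast
qed

lemma rep_stab_z: "4 \<le> i \<Longrightarrow> stab G (rep_act G) (i, H, C) = carrier G"
  unfolding stab_def using rep_act_z by simp

lemma rep_orb:
  assumes i: "i \<le> 3" and Hs: "H \<subseteq> carrier G" and t: "t \<in> carrier G" and t': "t' \<in> carrier G"
  shows "(i, H, l_coset G t' H) \<in> orb G (rep_act G) (i, H, l_coset G t H)"
proof -
  have "rep_act G (t' \<otimes> inv t) (i, H, l_coset G t H) = (i, H, l_coset G (t' \<otimes> inv t \<otimes> t) H)"
    using rep_act_c[OF i Hs _ t] t t' by simp
  also have "\<dots> = (i, H, l_coset G t' H)" using t t' by (simp add: m_assoc)
  finally have "\<exists>s. (i, H, l_coset G t' H) = rep_act G s (i, H, l_coset G t H) \<and> s \<in> carrier G"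
    using t t' by (intro exI[of _ "t' \<otimes> inv t"]) simp
  then show ?thesis unfolding orb_def by simp
qed

lemma rep_fix_c:
  assumes "x = (i, H, l_coset G t H)" "t \<in> carrier G" "i \<le> 3" "subgroup H G" "H \<noteq> carrier G"
  shows "stab G (rep_act G) x \<noteq> carrier G"
  using rep_stab_c[OF assms(4,2,3)] cj_proper[OF subgroup.subset[OF assms(4)] assms(2)] assms(1,5) by auto

end



locale thm_setting = group G for G (structure) +
  fixes GG :: "'a set set" and A :: "'x set" and actA :: "'a \<Rightarrow> 'x \<Rightarrow> 'x"
  assumes GG_sub: "\<forall>H\<in>GG. subgroup H G \<and> H \<noteq> carrier G \<and> \<not> normal H G"
    and GG_rep: "\<forall>H. subgroup H G \<and> H \<noteq> carrier G \<and> \<not> normal H G \<longrightarrow> (\<exists>!K. K \<in> GG \<and> conjugate_subgroups G K H)"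
    and act: "is_act G A actA"
begin

definition "NN = {N. normal N G \<and> N \<noteq> carrier G}"
definition "App H = (\<exists>a\<in>A. \<exists>g\<in>carrier G. stab G actA a = cj G g H)"
definition "Two H = (\<exists>a\<in>A. \<exists>b\<in>A. b \<notin> orb G actA a \<and> (\<exists>g\<in>carrier G. stab G actA a = cj G g H) \<and> (\<exists>g\<in>carrier G. stab G actA b = cj G g H))"
definition "KK = {H\<in>GG. App H}"
definition "K = {H\<in>GG. Two H}"
definition "T = {H\<in>GG. App H \<and> \<not> Two H}"
definition "L = {N\<in>NN. \<exists>a\<in>A. stab G actA a = N}"
definition "two = (\<exists>z1\<in>fixp G A actA. \<exists>z2\<in>fixp G A actA. z1 \<noteq> z2)"

lemma GG_props: "H \<in> GG \<Longrightarrow> subgroup H G \<and> H \<noteq> carrier G \<and> \<not> normal H G \<and> H \<subseteq> carrier G"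
proof -
  assume H: "H \<in> GG"
  have "subgroup H G \<and> H \<noteq> carrier G \<and> \<not> normal H G" using GG_sub H by (rule bspec)
  then show ?thesis using subgroup.subset by blast
qed

lemma NN_props: "N \<in> NN \<Longrightarrow> normal N G \<and> subgroup N G \<and> N \<noteq> carrier G \<and> N \<subseteq> carrier G"
  unfolding NN_def using normal_imp_subgroup subgroup.subset by blast

lemma stab_class:
  assumes a: "a \<in> A" and nf: "a \<notin> fixp G A actA"
  shows "stab G actA a \<in> NN \<or> (\<exists>H\<in>GG. \<exists>g\<in>carrier G. stab G actA a = cj G g H)"
proof -
  have sg: "subgroup (stab G actA a) G" by (rule stab_subgroup[OF act a])
  have ne: "stab G actA a \<noteq> carrier G" using nf a by (simp add: fixp_stab)
  show ?thesis
  proof (cases "normal (stab G actA a) G")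
    case True then show ?thesis unfolding NN_def using ne by simp
  next
    case False
    have "subgroup (stab G actA a) G \<and> stab G actA a \<noteq> carrier G \<and> \<not> normal (stab G actA a) G"
      using sg ne False by simp
    then have "\<exists>!K. K \<in> GG \<and> conjugate_subgroups G K (stab G actA a)" using GG_rep by simp
    then have "\<exists>K. K \<in> GG \<and> conjugate_subgroups G K (stab G actA a)" by (rule ex1_implies_ex)
    then obtain H where H: "H \<in> GG" "conjugate_subgroups G H (stab G actA a)" by blast
    then obtain g where "g \<in> carrier G" "stab G actA a = cj G g H"
      using conjugate_iff[of H "stab G actA a"] GG_props[OF H(1)] by blast
    then show ?thesis using H(1) by blast
  qed
qed

lemma GG_unique:
  assumes H1: "H1 \<in> GG" and H2: "H2 \<in> GG" and g1: "g1 \<in> carrier G" and g2: "g2 \<in> carrier G"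
    and e: "cj G g1 H1 = cj G g2 H2"
  shows "H1 = H2"
proof -
  have p2: "subgroup H2 G \<and> H2 \<noteq> carrier G \<and> \<not> normal H2 G" using GG_props[OF H2] by blast
  have ex: "\<exists>!K. K \<in> GG \<and> conjugate_subgroups G K H2" using GG_rep p2 by simp
  have "H2 = cj G (inv g2) (cj G g2 H2)" using cj_back[of H2 g2] GG_props[OF H2] g2 by simp
  also have "\<dots> = cj G (inv g2) (cj G g1 H1)" using e by simp
  also have "\<dots> = cj G (inv g2 \<otimes> g1) H1" using cj_cj g1 g2 by simp
  finally have c1: "conjugate_subgroups G H1 H2" using conjugate_iff[of H1] GG_props[OF H1] g1 g2 by blast
  have "H2 = cj G \<one> H2" using cj_one[of H2] GG_props[OF H2] by simp
  then have c2: "conjugate_subgroups G H2 H2" using conjugate_iff[of H2 H2] GG_props[OF H2] one_closed by blast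
  from ex obtain K0 where "K0 \<in> GG \<and> conjugate_subgroups G K0 H2"
    and u: "\<forall>y. y \<in> GG \<and> conjugate_subgroups G y H2 \<longrightarrow> y = K0" by (elim ex1E) blast
  have "H1 = K0" using u c1 H1 by blast
  moreover have "H2 = K0" using u c2 H2 by blast
  ultimately show ?thesis by simp
qed

lemma GG_NN:
  assumes H: "H \<in> GG" and N: "normal N G" and g: "g \<in> carrier G" and g': "g' \<in> carrier G"
    and e: "cj G g H = cj G g' N"
  shows False
proof -
  have "H = cj G (inv g) (cj G g H)" using cj_back[of H g] GG_props[OF H] g by simp
  also have "\<dots> = N" using e cj_normal[OF N g'] cj_normal[OF N inv_closed[OF g]] by simp
  finally show False using GG_props[OF H] N by simp
qed

lemma NN_eq: "normal N G \<Longrightarrow> normal N' G \<Longrightarrow> g \<in> carrier G \<Longrightarrow> g' \<in> carrier G \<Longrightarrow> cj G g N = cj G g' N' \<Longrightarrow> N = N'"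
  using cj_normal by simp

lemma move:
  assumes Hs: "H \<subseteq> carrier G" and a: "a \<in> A" and g: "g \<in> carrier G" and sa: "stab G actA a = cj G g H"
    and t: "t \<in> carrier G"
  shows "\<exists>a'\<in>orb G actA a. stab G actA a' = cj G t H"
proof -
  have tg: "t \<otimes> inv g \<in> carrier G" using t g by simp
  have "stab G actA (actA (t \<otimes> inv g) a) = cj G (t \<otimes> inv g) (cj G g H)" using stab_act[OF act tg a] sa by simp
  also have "\<dots> = cj G t H" using cj_cj[OF tg g] t g by (simp add: m_assoc)
  finally show ?thesis using orb_act[OF act tg a] by blast
qed

lemma orb_disj:
  assumes a: "a \<in> A" and b: "b \<in> A" and nb: "b \<notin> orb G actA a" and a': "a' \<in> orb G actA a" and b': "b' \<in> orb G actA b"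
  shows "a' \<noteq> b'"
proof
  assume e: "a' = b'"
  have "orb G actA a' = orb G actA a" using orb_eq[OF act a a'] .
  moreover have "orb G actA b' = orb G actA b" using orb_eq[OF act b b'] .
  ultimately have "orb G actA b = orb G actA a" using e by simp
  then show False using nb orb_self[OF act b] by blast
qed

lemma rep_sub:
  assumes "K2 \<subseteq> GG" "K1 \<subseteq> GG" "L' \<subseteq> NN"
  shows "\<And>H. H \<in> K2 \<union> K1 \<union> L' \<Longrightarrow> subgroup H G \<and> H \<noteq> carrier G"
proof -
  fix H assume "H \<in> K2 \<union> K1 \<union> L'"
  then have "H \<in> GG \<or> H \<in> NN" using assms by blast
  then show "subgroup H G \<and> H \<noteq> carrier G" using GG_props NN_props by blast
qed

lemma rep_fixp:
  assumes sub: "\<And>H. H \<in> K2 \<union> K1 \<union> L' \<Longrightarrow> subgroup H G \<and> H \<noteq> carrier G"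
    and x: "x \<in> fixp G (rep_carrier G K2 K1 L' n) (rep_act G)"
  shows "\<exists>i. x = (i, {}, {}) \<and> 4 \<le> i \<and> i < 4 + n"
proof -
  have xr: "x \<in> rep_carrier G K2 K1 L' n" and sx: "stab G (rep_act G) x = carrier G" using fixp_stab[THEN iffD1, OF x] by auto
  from xr show ?thesis
  proof (cases rule: rep_E)
    case (c i H t)
    have Hc: "i \<le> 3" "H \<in> K2 \<union> K1 \<union> L'" using rep_c_cases[OF c(3)] by auto
    have "stab G (rep_act G) x \<noteq> carrier G" using rep_fix_c[OF c(1) c(2) Hc(1)] sub[OF Hc(2)] by blast
    then show ?thesis using sx by simp
  next
    case (z i) then show ?thesis by blast
  qed
qed

lemma rep_z_fix: "4 \<le> i \<Longrightarrow> i < 4 + n \<Longrightarrow> (i, {}, {}) \<in> fixp G (rep_carrier G K2 K1 L' n) (rep_act G)"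
  by (simp add: fixp_stab rep_Iz rep_stab_z)

end



context thm_setting begin

lemma fix_stab_eq: "z \<in> fixp G A actA \<Longrightarrow> stab G actA z = carrier G"
  by (simp add: fixp_stab)

lemma nfix_stab: "a \<in> A \<Longrightarrow> a \<notin> fixp G A actA \<Longrightarrow> stab G actA a \<noteq> carrier G"
  by (simp add: fixp_stab)

lemma GG_NN_disj: "H \<in> GG \<Longrightarrow> H \<in> NN \<Longrightarrow> False"
  using GG_props NN_props by blast

lemma cj_inj:
  assumes H: "H \<in> GG \<or> H \<in> NN" and H': "H' \<in> GG \<or> H' \<in> NN" and t: "t \<in> carrier G" and t': "t' \<in> carrier G"
    and e: "cj G t H = cj G t' H'"
  shows "H = H'"
proof -
  { assume a: "H \<in> GG" "H' \<in> GG" then have ?thesis using GG_unique[OF a t t' e] by simp }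
  moreover
  { assume a: "H \<in> GG" "H' \<in> NN" then have ?thesis using GG_NN[OF a(1) _ t t' e] NN_props[OF a(2)] by blast }
  moreover
  { assume a: "H \<in> NN" "H' \<in> GG" then have ?thesis using GG_NN[OF a(2) _ t' t e[symmetric]] NN_props[OF a(1)] by blast }
  moreover
  { assume a: "H \<in> NN" "H' \<in> NN" then have ?thesis using NN_eq[OF _ _ t t' e] NN_props[OF a(1)] NN_props[OF a(2)] by blast }
  ultimately show ?thesis using H H' by blast
qed

lemma App_move: "App H \<Longrightarrow> H \<subseteq> carrier G \<Longrightarrow> t \<in> carrier G \<Longrightarrow> \<exists>a\<in>A. stab G actA a = cj G t H"
proof -
  assume "App H" and Hs: "H \<subseteq> carrier G" and t: "t \<in> carrier G"
  then obtain a g where a: "a \<in> A" and g: "g \<in> carrier G" and sa: "stab G actA a = cj G g H" unfolding App_def by blast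
  obtain a' where "a' \<in> orb G actA a" "stab G actA a' = cj G t H" using move[OF Hs a g sa t] by blast
  then show ?thesis using orb_sub[OF act a] by blast
qed

lemma Two_App: "Two H \<Longrightarrow> App H"
  unfolding Two_def App_def by blast

lemma L_move: "H \<in> L \<Longrightarrow> t \<in> carrier G \<Longrightarrow> \<exists>a\<in>A. stab G actA a = cj G t H"
proof -
  assume H: "H \<in> L" and t: "t \<in> carrier G"
  then obtain a where "a \<in> A" "stab G actA a = H" unfolding L_def by blast
  moreover have "H \<in> NN" using H unfolding L_def by blast
  then have "cj G t H = H" using cj_normal[OF _ t] NN_props by blast
  ultimately show ?thesis by auto
qed

lemma K_sub: "K \<subseteq> GG" and T_sub: "T \<subseteq> GG" and KK_sub: "KK \<subseteq> GG" and L_sub: "L \<subseteq> NN"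
  unfolding K_def T_def KK_def L_def by auto

lemma KT_disj: "H \<in> K \<Longrightarrow> H \<in> T \<Longrightarrow> False"
  unfolding K_def T_def by blast

lemma AR_NN:
  assumes a: "a \<in> A" and N: "stab G actA a \<in> NN"
  shows "(3, stab G actA a, l_coset G \<one> (stab G actA a)) \<in> rep_carrier G K2 K1 L n"
    and "stab G (rep_act G) (3, stab G actA a, l_coset G \<one> (stab G actA a)) = stab G actA a"
proof -
  have "stab G actA a \<in> L" unfolding L_def using a N by blast
  then show "(3, stab G actA a, l_coset G \<one> (stab G actA a)) \<in> rep_carrier G K2 K1 L n"
    using rep_I3 one_closed by blast
  have sg: "subgroup (stab G actA a) G" using NN_props[OF N] by blast
  show "stab G (rep_act G) (3, stab G actA a, l_coset G \<one> (stab G actA a)) = stab G actA a"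
    using rep_stab_c[OF sg one_closed] cj_one[OF subgroup.subset[OF sg]] by simp
qed

lemma AR_GG1:
  assumes a: "a \<in> A" and H: "H \<in> GG" and g: "g \<in> carrier G" and sa: "stab G actA a = cj G g H"
  shows "\<exists>i\<in>{0::nat,2}. (i, H, l_coset G g H) \<in> rep_carrier G K T L n \<and> stab G (rep_act G) (i, H, l_coset G g H) = stab G actA a"
proof -
  have sg: "subgroup H G" using GG_props[OF H] by blast
  show ?thesis
  proof (cases "Two H")
    case True
    then have "H \<in> K" unfolding K_def using H by blast
    then have "(0, H, l_coset G g H) \<in> rep_carrier G K T L n" using rep_I01[of 0 H K g] g by simp
    moreover have "stab G (rep_act G) (0::nat, H, l_coset G g H) = stab G actA a" using rep_stab_c[OF sg g] sa by simp
    ultimately show ?thesis by blast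
  next
    case False
    have "App H" unfolding App_def using a g sa by blast
    then have "H \<in> T" unfolding T_def using H False by blast
    then have "(2, H, l_coset G g H) \<in> rep_carrier G K T L n" using rep_I2 g by blast
    moreover have "stab G (rep_act G) (2::nat, H, l_coset G g H) = stab G actA a" using rep_stab_c[OF sg g] sa by simp
    ultimately show ?thesis by blast
  qed
qed

lemma AR_GG2:
  assumes a: "a \<in> A" and H: "H \<in> GG" and g: "g \<in> carrier G" and sa: "stab G actA a = cj G g H"
  shows "(2, H, l_coset G g H) \<in> rep_carrier G {} KK L n \<and> stab G (rep_act G) (2, H, l_coset G g H) = stab G actA a"
proof -
  have sg: "subgroup H G" using GG_props[OF H] by blast
  have "App H" unfolding App_def using a g sa by blast
  then have "H \<in> KK" unfolding KK_def using H by blast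
  then have "(2, H, l_coset G g H) \<in> rep_carrier G {} KK L n" using rep_I2 g by blast
  moreover have "stab G (rep_act G) (2::nat, H, l_coset G g H) = stab G actA a" using rep_stab_c[OF sg g] sa by simp
  ultimately show ?thesis by blast
qed

end



lemma Q2I: "a \<in> Y \<Longrightarrow> b \<in> Y \<Longrightarrow> P \<subseteq> f a \<Longrightarrow> Q \<subseteq> f b \<Longrightarrow> a \<noteq> b \<Longrightarrow> \<exists>a\<in>Y. \<exists>b\<in>Y. P \<subseteq> f a \<and> Q \<subseteq> f b \<and> a \<noteq> b"
  by blast

context thm_setting begin

lemma R1_sub: "H \<in> K \<union> T \<union> L \<Longrightarrow> subgroup H G \<and> H \<noteq> carrier G"
  by (rule rep_sub[OF K_sub T_sub L_sub])

lemma R1_P: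
  assumes nf: "fixp G A actA = {}" and a: "a \<in> A"
  shows "\<exists>y\<in>rep_carrier G K T L 0. stab G (rep_act G) y = stab G actA a"
proof -
  have nfa: "a \<notin> fixp G A actA" using nf by simp
  from stab_class[OF a nfa] show ?thesis
  proof
    assume N: "stab G actA a \<in> NN"
    show ?thesis using AR_NN[OF a N] by blast
  next
    assume "\<exists>H\<in>GG. \<exists>g\<in>carrier G. stab G actA a = cj G g H"
    then obtain H g where H: "H \<in> GG" and g: "g \<in> carrier G" and sa: "stab G actA a = cj G g H" by blast
    show ?thesis using AR_GG1[OF a H g sa] by blast
  qed
qed

lemma R1_act:
  assumes nf: "fixp G A actA = {}"
  shows "is_act G (rep_carrier G K T L 0) (rep_act G)"
proof (rule rep_is_act)
  show "\<And>H. H \<in> K \<union> T \<union> L \<Longrightarrow> subgroup H G" using R1_sub by blast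
  obtain a where "a \<in> A" using act_ne[OF act] by blast
  then show "rep_carrier G K T L 0 \<noteq> {}" using R1_P[OF nf] by blast
qed

lemma AR1_Q2:
  assumes nf: "fixp G A actA = {}" and u: "u \<in> A" and v: "v \<in> A" and nvu: "v \<notin> orb G actA u"
  shows "\<exists>y1\<in>rep_carrier G K T L 0. \<exists>y2\<in>rep_carrier G K T L 0.
     stab G actA u \<subseteq> stab G (rep_act G) y1 \<and> stab G actA v \<subseteq> stab G (rep_act G) y2 \<and> y1 \<noteq> y2"
proof -
  have nfu: "u \<notin> fixp G A actA" and nfv: "v \<notin> fixp G A actA" using nf by auto
  note cu = stab_class[OF u nfu] and cv = stab_class[OF v nfv]
  show ?thesis
  proof (cases "stab G actA u \<in> NN")
    case NU: True
    note y1 = AR_NN[OF u NU]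
    show ?thesis
    proof (cases "stab G actA v \<in> NN")
      case NV: True
      note y2 = AR_NN[OF v NV]
      show ?thesis
      proof (cases "stab G actA u = stab G actA v")
        case False
        show ?thesis by (rule Q2I[OF y1(1) y2(1)]) (use y1(2) y2(2) False in simp_all)
      next
        case True
        define Hu where "Hu = stab G actA u"
        have sg: "subgroup Hu G" and nc: "Hu \<noteq> carrier G" and nrm: "normal Hu G" using NN_props NU unfolding Hu_def by blast+
        have HuL: "Hu \<in> L" unfolding L_def Hu_def using u NU by blast
        obtain t where t: "t \<in> carrier G" "t \<notin> Hu" using nc subgroup.subset[OF sg] by blast
        have m2: "(3, Hu, l_coset G t Hu) \<in> rep_carrier G K T L 0" using rep_I3[OF HuL t(1)] by simp
        have s2: "stab G (rep_act G) (3::nat, Hu, l_coset G t Hu) = Hu"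
          using rep_stab_c[OF sg t(1)] cj_normal[OF nrm t(1)] by simp
        have ne: "l_coset G \<one> Hu \<noteq> l_coset G t Hu"
        proof
          assume "l_coset G \<one> Hu = l_coset G t Hu"
          then have "inv t \<otimes> \<one> \<in> Hu" using lcos_eq_iff[OF sg one_closed t(1)] by simp
          then have "inv t \<in> Hu" using t(1) by simp
          then have "inv (inv t) \<in> Hu" using subgroup.m_inv_closed[OF sg] by blast
          then show False using t by simp
        qed
        show ?thesis
          by (rule Q2I[OF y1(1) m2[unfolded Hu_def]]) (use y1(2) s2 True ne in \<open>simp_all add: Hu_def\<close>)
      qed
    next
      case NV: False
      then obtain H g where H: "H \<in> GG" and g: "g \<in> carrier G" and sv: "stab G actA v = cj G g H" using cv by blast
      obtain i where i: "i \<in> {0::nat,2}" "(i, H, l_coset G g H) \<in> rep_carrier G K T L 0"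
        "stab G (rep_act G) (i, H, l_coset G g H) = stab G actA v" using AR_GG1[OF v H g sv] by blast
      show ?thesis by (rule Q2I[OF y1(1) i(2)]) (use y1(2) i in auto)
    qed
  next
    case NU: False
    then obtain H g where H: "H \<in> GG" and g: "g \<in> carrier G" and su: "stab G actA u = cj G g H" using cu by blast
    obtain i where i: "i \<in> {0::nat,2}" "(i, H, l_coset G g H) \<in> rep_carrier G K T L 0"
      "stab G (rep_act G) (i, H, l_coset G g H) = stab G actA u" using AR_GG1[OF u H g su] by blast
    show ?thesis
    proof (cases "stab G actA v \<in> NN")
      case NV: True
      note y2 = AR_NN[OF v NV]
      show ?thesis by (rule Q2I[OF i(2) y2(1)]) (use y2(2) i in auto)
    next
      case NV: False
      then obtain H' g' where H': "H' \<in> GG" and g': "g' \<in> carrier G" and sv: "stab G actA v = cj G g' H'" using cv by blast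
      show ?thesis
      proof (cases "H = H'")
        case False
        obtain i' where i': "i' \<in> {0::nat,2}" "(i', H', l_coset G g' H') \<in> rep_carrier G K T L 0"
          "stab G (rep_act G) (i', H', l_coset G g' H') = stab G actA v" using AR_GG1[OF v H' g' sv] by blast
        show ?thesis by (rule Q2I[OF i(2) i'(2)]) (use i i' False in auto)
      next
        case True
        have "Two H" unfolding Two_def using u v nvu g g' su sv True by blast
        then have HK: "H \<in> K" unfolding K_def using H by blast
        have sg: "subgroup H G" using GG_props[OF H] by blast
        have m1: "(0, H, l_coset G g H) \<in> rep_carrier G K T L 0" using rep_I01[of 0 H K g] HK g by simp
        have m2: "(1, H, l_coset G g' H) \<in> rep_carrier G K T L 0" using rep_I01[of 1 H K g'] HK g' by simp
        have s1: "stab G (rep_act G) (0::nat, H, l_coset G g H) = stab G actA u" using rep_stab_c[OF sg g] su by simp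
        have s2: "stab G (rep_act G) (1::nat, H, l_coset G g' H) = stab G actA v" using rep_stab_c[OF sg g'] sv True by simp
        show ?thesis by (rule Q2I[OF m1 m2]) (use s1 s2 in simp_all)
      qed
    qed
  qed
qed

lemma sepAR1:
  assumes nf: "fixp G A actA = {}"
  shows "\<forall>u\<in>A. \<forall>v\<in>A. u \<noteq> v \<longrightarrow> (\<exists>\<phi>. act_hom G A actA (rep_carrier G K T L 0) (rep_act G) \<phi> \<and> \<phi> u \<noteq> \<phi> v)"
  by (rule sep_homs[OF act R1_act[OF nf] R1_P[OF nf] AR1_Q2[OF nf]])

lemma RA_P_c:
  assumes c: "((i::nat) \<in> {0,1} \<and> H \<in> K2) \<or> (i = 2 \<and> H \<in> K1) \<or> (i = 3 \<and> H \<in> L)"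
    and K2: "\<And>H. H \<in> K2 \<Longrightarrow> App H" and K1: "\<And>H. H \<in> K1 \<Longrightarrow> App H"
    and Hs: "H \<subseteq> carrier G" and t: "t \<in> carrier G"
  shows "\<exists>a\<in>A. stab G actA a = cj G t H"
  using c
proof (elim disjE conjE)
  assume "H \<in> K2" then show ?thesis using App_move[OF K2 Hs t] by blast
next
  assume "H \<in> K1" then show ?thesis using App_move[OF K1 Hs t] by blast
next
  assume "H \<in> L" then show ?thesis using L_move[OF _ t] by blast
qed

lemma K_App: "H \<in> K \<Longrightarrow> App H" unfolding K_def using Two_App by blast
lemma T_App: "H \<in> T \<Longrightarrow> App H" unfolding T_def by blast
lemma KK_App: "H \<in> KK \<Longrightarrow> App H" unfolding KK_def by blast

lemma RA1_P:
  assumes y: "y \<in> rep_carrier G K T L 0"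
  shows "\<exists>a\<in>A. stab G actA a = stab G (rep_act G) y"
  using y
proof (cases rule: rep_E)
  case (c i H t)
  have Hc: "i \<le> 3" "H \<in> K \<union> T \<union> L" using rep_c_cases[OF c(3)] by auto
  have sg: "subgroup H G" using R1_sub[OF Hc(2)] by blast
  have "stab G (rep_act G) y = cj G t H" using rep_stab_c[OF sg c(2) Hc(1)] c(1) by simp
  then show ?thesis using RA_P_c[OF c(3) K_App T_App subgroup.subset[OF sg] c(2)] by simp
next
  case (z i) then show ?thesis by simp
qed

lemma tagK:
  assumes "((i::nat) \<in> {0,1} \<and> H \<in> K) \<or> (i = 2 \<and> H \<in> T) \<or> (i = 3 \<and> H \<in> L)"
    and "((i'::nat) \<in> {0,1} \<and> H \<in> K) \<or> (i' = 2 \<and> H \<in> T) \<or> (i' = 3 \<and> H \<in> L)"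
    and "i \<noteq> i'"
  shows "H \<in> K"
  using assms KT_disj GG_NN_disj K_sub T_sub L_sub by blast

lemma RA1_Q2:
  assumes y1: "y1 \<in> rep_carrier G K T L 0" and y2: "y2 \<in> rep_carrier G K T L 0"
    and nyo: "y2 \<notin> orb G (rep_act G) y1"
  shows "\<exists>a1\<in>A. \<exists>a2\<in>A. stab G (rep_act G) y1 \<subseteq> stab G actA a1 \<and> stab G (rep_act G) y2 \<subseteq> stab G actA a2 \<and> a1 \<noteq> a2"
  using y1
proof (cases rule: rep_E)
  case (z i) then show ?thesis by simp
next
  case c1: (c i H t)
  from y2 show ?thesis
  proof (cases rule: rep_E)
    case (z i) then show ?thesis by simp
  next
    case c2: (c i' H' t')
    have Hc: "i \<le> 3" "H \<in> K \<union> T \<union> L" using rep_c_cases[OF c1(3)] by auto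
    have Hc': "i' \<le> 3" "H' \<in> K \<union> T \<union> L" using rep_c_cases[OF c2(3)] by auto
    have sg: "subgroup H G" using R1_sub[OF Hc(2)] by blast
    have sg': "subgroup H' G" using R1_sub[OF Hc'(2)] by blast
    have st1: "stab G (rep_act G) y1 = cj G t H" using rep_stab_c[OF sg c1(2) Hc(1)] c1(1) by simp
    have st2: "stab G (rep_act G) y2 = cj G t' H'" using rep_stab_c[OF sg' c2(2) Hc'(1)] c2(1) by simp
    show ?thesis
    proof (cases "H = H'")
      case False
      obtain a1 where a1: "a1 \<in> A" "stab G actA a1 = cj G t H"
        using RA_P_c[OF c1(3) K_App T_App subgroup.subset[OF sg] c1(2)] by blast
      obtain a2 where a2: "a2 \<in> A" "stab G actA a2 = cj G t' H'"
        using RA_P_c[OF c2(3) K_App T_App subgroup.subset[OF sg'] c2(2)] by blast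
      have GN: "H \<in> GG \<or> H \<in> NN" "H' \<in> GG \<or> H' \<in> NN" using Hc(2) Hc'(2) K_sub T_sub L_sub by blast+
      have ne: "a1 \<noteq> a2"
      proof
        assume "a1 = a2"
        then have "cj G t H = cj G t' H'" using a1 a2 by simp
        then show False using cj_inj[OF GN c1(2) c2(2)] False by simp
      qed
      show ?thesis by (rule Q2I[OF a1(1) a2(1) _ _ ne]) (use a1 a2 st1 st2 in simp_all)
    next
      case True
      have ii: "i \<noteq> i'"
      proof
        assume "i = i'"
        then have "y2 \<in> orb G (rep_act G) y1"
          using rep_orb[OF Hc(1) subgroup.subset[OF sg] c1(2) c2(2)] c1(1) c2(1) True by simp
        then show False using nyo by simp
      qed
      have HK: "H \<in> K" using tagK[OF c1(3) c2(3)[folded True] ii] .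
      then have "Two H" unfolding K_def by blast
      then obtain a b g g' where ab: "a \<in> A" "b \<in> A" "b \<notin> orb G actA a"
        and g: "g \<in> carrier G" "stab G actA a = cj G g H" and g': "g' \<in> carrier G" "stab G actA b = cj G g' H"
        unfolding Two_def by blast
      obtain a1 where a1: "a1 \<in> orb G actA a" "stab G actA a1 = cj G t H"
        using move[OF subgroup.subset[OF sg] ab(1) g c1(2)] by blast
      obtain a2 where a2: "a2 \<in> orb G actA b" "stab G actA a2 = cj G t' H"
        using move[OF subgroup.subset[OF sg] ab(2) g' c2(2)] by blast
      have ne: "a1 \<noteq> a2" using orb_disj[OF ab a1(1) a2(1)] .
      have a1A: "a1 \<in> A" using a1(1) orb_sub[OF act ab(1)] by blast
      have a2A: "a2 \<in> A" using a2(1) orb_sub[OF act ab(2)] by blast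
      show ?thesis by (rule Q2I[OF a1A a2A _ _ ne]) (use a1 a2 st1 st2 True in simp_all)
    qed
  qed
qed

lemma sepRA1:
  assumes nf: "fixp G A actA = {}"
  shows "\<forall>u\<in>rep_carrier G K T L 0. \<forall>v\<in>rep_carrier G K T L 0. u \<noteq> v \<longrightarrow>
     (\<exists>\<phi>. act_hom G (rep_carrier G K T L 0) (rep_act G) A actA \<phi> \<and> \<phi> u \<noteq> \<phi> v)"
proof (rule sep_homs[OF R1_act[OF nf] act])
  show "\<And>x. x \<in> rep_carrier G K T L 0 \<Longrightarrow> \<exists>y\<in>A. stab G actA y = stab G (rep_act G) x"
    using RA1_P by blast
  show "\<And>u v. u \<in> rep_carrier G K T L 0 \<Longrightarrow> v \<in> rep_carrier G K T L 0 \<Longrightarrow> v \<notin> orb G (rep_act G) u \<Longrightarrow>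
      \<exists>y1\<in>A. \<exists>y2\<in>A. stab G (rep_act G) u \<subseteq> stab G actA y1 \<and> stab G (rep_act G) v \<subseteq> stab G actA y2 \<and> y1 \<noteq> y2"
    by (rule RA1_Q2)
qed

lemma type1_exists:
  assumes nf: "fixp G A actA = {}"
  shows "geom_equiv G A actA (rep_carrier G K T L 0) (rep_act G)"
  by (rule geom_equivI[OF act R1_act[OF nf] sepAR1[OF nf] sepRA1[OF nf]])

end



context thm_setting begin

definition "nz = (if two then 2 else 1 :: nat)"

lemma R2_sub: "H \<in> {} \<union> KK \<union> L \<Longrightarrow> subgroup H G \<and> H \<noteq> carrier G"
  by (rule rep_sub[OF empty_subsetI KK_sub L_sub])

lemma z4: "(4::nat, {}, {}) \<in> rep_carrier G {} KK L nz" "stab G (rep_act G) (4::nat, {}, {}) = carrier G"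
  using rep_Iz[of 4 nz] rep_stab_z[of 4] unfolding nz_def by auto

lemma R2_P:
  assumes a: "a \<in> A"
  shows "\<exists>y\<in>rep_carrier G {} KK L nz. stab G (rep_act G) y = stab G actA a"
proof (cases "a \<in> fixp G A actA")
  case True
  show ?thesis
  proof (rule bexI[of _ "(4::nat, {}, {})"])
    show "stab G (rep_act G) (4::nat, {}, {}) = stab G actA a" using z4(2) fix_stab_eq[OF True] by simp
    show "(4::nat, {}, {}) \<in> rep_carrier G {} KK L nz" by (rule z4(1))
  qed
next
  case False
  from stab_class[OF a False] show ?thesis
  proof
    assume N: "stab G actA a \<in> NN"
    show ?thesis using AR_NN[OF a N] by blast
  next
    assume "\<exists>H\<in>GG. \<exists>g\<in>carrier G. stab G actA a = cj G g H"
    then obtain H g where H: "H \<in> GG" and g: "g \<in> carrier G" and sa: "stab G actA a = cj G g H" by blast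
    show ?thesis using AR_GG2[OF a H g sa] by blast
  qed
qed

lemma R2_act: "is_act G (rep_carrier G {} KK L nz) (rep_act G)"
proof (rule rep_is_act)
  show "\<And>H. H \<in> {} \<union> KK \<union> L \<Longrightarrow> subgroup H G" using R2_sub by blast
  show "rep_carrier G {} KK L nz \<noteq> {}" using z4 by blast
qed

lemma AR2_Q2:
  assumes u: "u \<in> A" and v: "v \<in> A" and nvu: "v \<notin> orb G actA u"
  shows "\<exists>y1\<in>rep_carrier G {} KK L nz. \<exists>y2\<in>rep_carrier G {} KK L nz.
     stab G actA u \<subseteq> stab G (rep_act G) y1 \<and> stab G actA v \<subseteq> stab G (rep_act G) y2 \<and> y1 \<noteq> y2"
proof (cases "u \<in> fixp G A actA")
  case False
  obtain y1 where y1: "y1 \<in> rep_carrier G {} KK L nz" "stab G (rep_act G) y1 = stab G actA u" using R2_P[OF u] by blast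
  have ne: "y1 \<noteq> (4, {}, {})" using y1(2) z4(2) nfix_stab[OF u False] by auto
  show ?thesis by (rule Q2I[OF y1(1) z4(1) _ _ ne]) (use y1 z4 stab_sub in \<open>auto dest: subsetD[OF stab_sub]\<close>)
next
  case uf: True
  show ?thesis
  proof (cases "v \<in> fixp G A actA")
    case False
    obtain y2 where y2: "y2 \<in> rep_carrier G {} KK L nz" "stab G (rep_act G) y2 = stab G actA v" using R2_P[OF v] by blast
    have ne: "(4, {}, {}) \<noteq> y2" using y2(2) z4(2) nfix_stab[OF v False] by auto
    show ?thesis by (rule Q2I[OF z4(1) y2(1) _ _ ne]) (use y2 z4 stab_sub in \<open>auto dest: subsetD[OF stab_sub]\<close>)
  next
    case vf: True
    have "v \<noteq> u" using nvu orb_self[OF act u] by blast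
    then have tw: "two" unfolding two_def using uf vf by blast
    then have z5: "(5::nat, {}, {}) \<in> rep_carrier G {} KK L nz" using rep_Iz[of 5 nz] unfolding nz_def by simp
    have s5: "stab G (rep_act G) (5::nat, {}, {}) = carrier G" using rep_stab_z[of 5] by simp
    show ?thesis by (rule Q2I[OF z4(1) z5]) (use z4 s5 stab_sub in \<open>auto dest: subsetD[OF stab_sub]\<close>)
  qed
qed

lemma sepAR2: "\<forall>u\<in>A. \<forall>v\<in>A. u \<noteq> v \<longrightarrow> (\<exists>\<phi>. act_hom G A actA (rep_carrier G {} KK L nz) (rep_act G) \<phi> \<and> \<phi> u \<noteq> \<phi> v)"
  by (rule sep_homs[OF act R2_act R2_P AR2_Q2])

lemma RA2_P:
  assumes nf: "fixp G A actA \<noteq> {}" and y: "y \<in> rep_carrier G {} KK L nz"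
  shows "\<exists>a\<in>A. stab G actA a = stab G (rep_act G) y"
  using y
proof (cases rule: rep_E)
  case (c i H t)
  have Hc: "i \<le> 3" "H \<in> {} \<union> KK \<union> L" using rep_c_cases[OF c(3)] by auto
  have sg: "subgroup H G" using R2_sub[OF Hc(2)] by blast
  have "stab G (rep_act G) y = cj G t H" using rep_stab_c[OF sg c(2) Hc(1)] c(1) by simp
  moreover have "\<And>H. H \<in> {} \<Longrightarrow> App H" by simp
  ultimately show ?thesis using RA_P_c[OF c(3) _ KK_App subgroup.subset[OF sg] c(2)] by simp
next
  case (z i)
  obtain z0 where z0: "z0 \<in> fixp G A actA" using nf by blast
  have "z0 \<in> A" using z0 unfolding fixp_def by blast
  moreover have "stab G actA z0 = stab G (rep_act G) y" using fix_stab_eq[OF z0] rep_stab_z[of i] z by simp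
  ultimately show ?thesis by blast
qed

lemma RA2_Q2:
  assumes nf: "fixp G A actA \<noteq> {}" and y1: "y1 \<in> rep_carrier G {} KK L nz" and y2: "y2 \<in> rep_carrier G {} KK L nz"
    and nyo: "y2 \<notin> orb G (rep_act G) y1"
  shows "\<exists>a1\<in>A. \<exists>a2\<in>A. stab G (rep_act G) y1 \<subseteq> stab G actA a1 \<and> stab G (rep_act G) y2 \<subseteq> stab G actA a2 \<and> a1 \<noteq> a2"
proof -
  obtain z0 where z0: "z0 \<in> fixp G A actA" using nf by blast
  have z0A: "z0 \<in> A" using z0 unfolding fixp_def by blast
  have sz: "stab G actA z0 = carrier G" by (rule fix_stab_eq[OF z0])
  show ?thesis
  proof (cases "stab G (rep_act G) y1 = carrier G")
    case False
    obtain a1 where a1: "a1 \<in> A" "stab G actA a1 = stab G (rep_act G) y1" using RA2_P[OF nf y1] by blast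
    have ne: "a1 \<noteq> z0" using a1(2) sz False by auto
    show ?thesis by (rule Q2I[OF a1(1) z0A _ _ ne]) (use a1 sz stab_sub in \<open>auto dest: subsetD[OF stab_sub]\<close>)
  next
    case s1: True
    show ?thesis
    proof (cases "stab G (rep_act G) y2 = carrier G")
      case False
      obtain a2 where a2: "a2 \<in> A" "stab G actA a2 = stab G (rep_act G) y2" using RA2_P[OF nf y2] by blast
      have ne: "z0 \<noteq> a2" using a2(2) sz False by auto
      show ?thesis by (rule Q2I[OF z0A a2(1) _ _ ne]) (use a2 sz stab_sub in \<open>auto dest: subsetD[OF stab_sub]\<close>)
    next
      case s2: True
      have f1: "y1 \<in> fixp G (rep_carrier G {} KK L nz) (rep_act G)" using y1 s1 by (simp add: fixp_stab)
      have f2: "y2 \<in> fixp G (rep_carrier G {} KK L nz) (rep_act G)" using y2 s2 by (simp add: fixp_stab)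
      obtain i where i: "y1 = (i, {}, {})" "4 \<le> i" "i < 4 + nz" using rep_fixp[OF R2_sub f1] by blast
      obtain i' where i': "y2 = (i', {}, {})" "4 \<le> i'" "i' < 4 + nz" using rep_fixp[OF R2_sub f2] by blast
      have "i \<noteq> i'"
      proof
        assume "i = i'"
        then have "y2 = y1" using i i' by simp
        then show False using nyo orb_self[OF R2_act y1] by simp
      qed
      then have "two" using i i' unfolding nz_def by (cases two) auto
      then obtain w1 w2 where w: "w1 \<in> fixp G A actA" "w2 \<in> fixp G A actA" "w1 \<noteq> w2" unfolding two_def by blast
      have wA: "w1 \<in> A" "w2 \<in> A" using w unfolding fixp_def by blast+
      show ?thesis by (rule Q2I[OF wA(1) wA(2) _ _ w(3)]) (use fix_stab_eq[OF w(1)] fix_stab_eq[OF w(2)] stab_sub in \<open>auto dest: subsetD[OF stab_sub]\<close>)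
    qed
  qed
qed

lemma sepRA2:
  assumes nf: "fixp G A actA \<noteq> {}"
  shows "\<forall>u\<in>rep_carrier G {} KK L nz. \<forall>v\<in>rep_carrier G {} KK L nz. u \<noteq> v \<longrightarrow>
     (\<exists>\<phi>. act_hom G (rep_carrier G {} KK L nz) (rep_act G) A actA \<phi> \<and> \<phi> u \<noteq> \<phi> v)"
proof (rule sep_homs[OF R2_act act])
  show "\<And>x. x \<in> rep_carrier G {} KK L nz \<Longrightarrow> \<exists>y\<in>A. stab G actA y = stab G (rep_act G) x"
    using RA2_P[OF nf] by blast
  show "\<And>u v. u \<in> rep_carrier G {} KK L nz \<Longrightarrow> v \<in> rep_carrier G {} KK L nz \<Longrightarrow> v \<notin> orb G (rep_act G) u \<Longrightarrow>
      \<exists>y1\<in>A. \<exists>y2\<in>A. stab G (rep_act G) u \<subseteq> stab G actA y1 \<and> stab G (rep_act G) v \<subseteq> stab G actA y2 \<and> y1 \<noteq> y2"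
    by (rule RA2_Q2[OF nf])
qed

lemma type23_exists:
  assumes nf: "fixp G A actA \<noteq> {}"
  shows "geom_equiv G A actA (rep_carrier G {} KK L nz) (rep_act G)"
  by (rule geom_equivI[OF act R2_act sepAR2 sepRA2[OF nf]])

lemma excl1:
  assumes "K' \<subseteq> GG" "T' \<subseteq> GG" "L' \<subseteq> NN" and ge: "geom_equiv G A actA (rep_carrier G K' T' L' 0) (rep_act G)"
  shows "fixp G A actA = {}"
proof (rule ccontr)
  assume "fixp G A actA \<noteq> {}"
  then obtain z where z: "z \<in> fixp G A actA" by blast
  have "fixp G (rep_carrier G K' T' L' 0) (rep_act G) \<noteq> {}" by (rule inv_fix1[OF ge z])
  then obtain x where x: "x \<in> fixp G (rep_carrier G K' T' L' 0) (rep_act G)" by blast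
  show False using rep_fixp[OF rep_sub[OF assms(1-3)] x] by auto
qed

lemma excl2a:
  assumes ge: "geom_equiv G A actA (rep_carrier G K2 K1 L' n) (rep_act G)" and n: "1 \<le> n"
  shows "fixp G A actA \<noteq> {}"
proof -
  have "(4::nat, {}, {}) \<in> fixp G (rep_carrier G K2 K1 L' n) (rep_act G)" by (rule rep_z_fix) (use n in simp_all)
  then show ?thesis by (rule inv_fix1[OF geom_equiv_sym[OF ge]])
qed

lemma excl2b:
  assumes "K1 \<subseteq> GG" "L' \<subseteq> NN" and ge: "geom_equiv G A actA (rep_carrier G {} K1 L' 1) (rep_act G)"
  shows "\<not> two"
proof
  assume "two"
  then obtain z1 z2 where z: "z1 \<in> fixp G A actA" "z2 \<in> fixp G A actA" "z1 \<noteq> z2" unfolding two_def by blast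
  obtain w1 w2 where w: "w1 \<in> fixp G (rep_carrier G {} K1 L' 1) (rep_act G)" "w2 \<in> fixp G (rep_carrier G {} K1 L' 1) (rep_act G)" "w1 \<noteq> w2"
    using inv_fix2[OF ge z] by blast
  have sub: "\<And>H. H \<in> {} \<union> K1 \<union> L' \<Longrightarrow> subgroup H G \<and> H \<noteq> carrier G" by (rule rep_sub[OF empty_subsetI assms(1,2)])
  obtain i where i: "w1 = (i, {}, {})" "4 \<le> i" "i < 4 + 1" using rep_fixp[OF sub w(1)] by blast
  obtain i' where i': "w2 = (i', {}, {})" "4 \<le> i'" "i' < 4 + 1" using rep_fixp[OF sub w(2)] by blast
  have "i = i'" using i(2,3) i'(2,3) by simp
  then show False using i(1) i'(1) w(3) by simp
qed

lemma excl3: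
  assumes ge: "geom_equiv G A actA (rep_carrier G K2 K1 L' 2) (rep_act G)"
  shows "two"
proof -
  have f4: "(4::nat, {}, {}) \<in> fixp G (rep_carrier G K2 K1 L' 2) (rep_act G)" by (rule rep_z_fix) simp_all
  have f5: "(5::nat, {}, {}) \<in> fixp G (rep_carrier G K2 K1 L' 2) (rep_act G)" by (rule rep_z_fix) simp_all
  have ne: "(4::nat, {}, {}) \<noteq> (5::nat, {}, {})" by simp
  have "\<exists>w1\<in>fixp G A actA. \<exists>w2\<in>fixp G A actA. w1 \<noteq> w2" by (rule inv_fix2[OF geom_equiv_sym[OF ge] f4 f5 ne])
  then show ?thesis unfolding two_def .
qed

lemma main_let:
  shows
    "let type1 = (\<exists>K T L. K \<subseteq> GG \<and> T \<subseteq> GG \<and> K \<inter> T = {} \<and> L \<subseteq> {N. normal N G \<and> N \<noteq> carrier G} \<and>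
                    geom_equiv G A actA (rep_carrier G K T L 0) (rep_act G));
         type2 = (\<exists>K L. K \<subseteq> GG \<and> L \<subseteq> {N. normal N G \<and> N \<noteq> carrier G} \<and>
                    geom_equiv G A actA (rep_carrier G {} K L 1) (rep_act G));
         type3 = (\<exists>K L. K \<subseteq> GG \<and> L \<subseteq> {N. normal N G \<and> N \<noteq> carrier G} \<and>
                    geom_equiv G A actA (rep_carrier G {} K L 2) (rep_act G))
     in (type1 \<and> \<not> type2 \<and> \<not> type3) \<or> (\<not> type1 \<and> type2 \<and> \<not> type3) \<or>
        (\<not> type1 \<and> \<not> type2 \<and> type3)"
proof -
  have NNe: "{N. normal N G \<and> N \<noteq> carrier G} = NN" unfolding NN_def by simp
  define t1 where "t1 = (\<exists>K T L. K \<subseteq> GG \<and> T \<subseteq> GG \<and> K \<inter> T = {} \<and> L \<subseteq> NN \<and>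
                    geom_equiv G A actA (rep_carrier G K T L 0) (rep_act G))"
  define t2 where "t2 = (\<exists>K L. K \<subseteq> GG \<and> L \<subseteq> NN \<and> geom_equiv G A actA (rep_carrier G {} K L 1) (rep_act G))"
  define t3 where "t3 = (\<exists>K L. K \<subseteq> GG \<and> L \<subseteq> NN \<and> geom_equiv G A actA (rep_carrier G {} K L 2) (rep_act G))"
  have tw: "two \<Longrightarrow> fixp G A actA \<noteq> {}" unfolding two_def by blast
  have e1: "t1 \<longleftrightarrow> fixp G A actA = {}"
  proof
    assume t1
    then obtain K' T' L' where h: "K' \<subseteq> GG" "T' \<subseteq> GG" "L' \<subseteq> NN"
       "geom_equiv G A actA (rep_carrier G K' T' L' 0) (rep_act G)" unfolding t1_def by blast
    show "fixp G A actA = {}" by (rule excl1[OF h])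
  next
    assume nf: "fixp G A actA = {}"
    have "K \<inter> T = {}" using KT_disj by blast
    then have "K \<subseteq> GG \<and> T \<subseteq> GG \<and> K \<inter> T = {} \<and> L \<subseteq> NN \<and> geom_equiv G A actA (rep_carrier G K T L 0) (rep_act G)"
      using K_sub T_sub L_sub type1_exists[OF nf] by simp
    then show t1 unfolding t1_def by blast
  qed
  have e2: "t2 \<longleftrightarrow> fixp G A actA \<noteq> {} \<and> \<not> two"
  proof
    assume t2
    then obtain K1 L' where "K1 \<subseteq> GG" "L' \<subseteq> NN" "geom_equiv G A actA (rep_carrier G {} K1 L' 1) (rep_act G)"
      unfolding t2_def by blast
    then show "fixp G A actA \<noteq> {} \<and> \<not> two" using excl2a[of "{}" K1 L' 1] excl2b[of K1 L'] by simp
  next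
    assume h: "fixp G A actA \<noteq> {} \<and> \<not> two"
    then have "nz = 1" unfolding nz_def by simp
    then have "KK \<subseteq> GG \<and> L \<subseteq> NN \<and> geom_equiv G A actA (rep_carrier G {} KK L 1) (rep_act G)"
      using KK_sub L_sub type23_exists[OF conjunct1[OF h]] by simp
    then show t2 unfolding t2_def by blast
  qed
  have e3: "t3 \<longleftrightarrow> two"
  proof
    assume t3
    then obtain K1 L' where "geom_equiv G A actA (rep_carrier G {} K1 L' 2) (rep_act G)"
      unfolding t3_def by blast
    then show two using excl3 by blast
  next
    assume h: two
    then have "nz = 2" unfolding nz_def by simp
    then have "KK \<subseteq> GG \<and> L \<subseteq> NN \<and> geom_equiv G A actA (rep_carrier G {} KK L 2) (rep_act G)"
      using KK_sub L_sub type23_exists[OF tw[OF h]] by simp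
    then show t3 unfolding t3_def by blast
  qed
  have "(t1 \<and> \<not> t2 \<and> \<not> t3) \<or> (\<not> t1 \<and> t2 \<and> \<not> t3) \<or> (\<not> t1 \<and> \<not> t2 \<and> t3)"
    using tw by (cases "fixp G A actA = {}"; cases two) (simp_all add: e1 e2 e3)
  then show ?thesis unfolding Let_def NNe t1_def t2_def t3_def .
qed

end

theorem theorem3p21:
  fixes S :: "('g, 'm) monoid_scheme"
    and \<G> :: "'g set set"
    and A :: "'a set" and actA :: "'g \<Rightarrow> 'a \<Rightarrow> 'a"
  assumes grp: "group S"
    and \<G>_sub: "\<forall>G\<in>\<G>. subgroup G S \<and> G \<noteq> carrier S \<and> \<not> normal G S"
    and \<G>_rep: "\<forall>H. subgroup H S \<and> H \<noteq> carrier S \<and> \<not> normal H S \<longrightarrow>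
                   (\<exists>!G. G \<in> \<G> \<and> conjugate_subgroups S G H)"
    and act: "is_act S A actA"
  defines "\<N> \<equiv> {N. normal N S \<and> N \<noteq> carrier S}"
  shows
    "let type1 = (\<exists>K T L. K \<subseteq> \<G> \<and> T \<subseteq> \<G> \<and> K \<inter> T = {} \<and> L \<subseteq> \<N> \<and>
                    geom_equiv S A actA (rep_carrier S K T L 0) (rep_act S));
         type2 = (\<exists>K L. K \<subseteq> \<G> \<and> L \<subseteq> \<N> \<and>
                    geom_equiv S A actA (rep_carrier S {} K L 1) (rep_act S));
         type3 = (\<exists>K L. K \<subseteq> \<G> \<and> L \<subseteq> \<N> \<and>
                    geom_equiv S A actA (rep_carrier S {} K L 2) (rep_act S))
     in (type1 \<and> \<not> type2 \<and> \<not> type3) \<or> (\<not> type1 \<and> type2 \<and> \<not> type3) \<or>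
        (\<not> type1 \<and> \<not> type2 \<and> type3)"
  proof -
  have ts: "thm_setting S \<G> A actA"
    unfolding thm_setting_def thm_setting_axioms_def using grp \<G>_sub \<G>_rep act by blast
  show ?thesis unfolding \<N>_def using thm_setting.main_let[OF ts] .
qed

end
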